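(* Let $s\in W_p$ be a reflection in a wall of $\overline{C}$, $\lambda\in C\cap X(T)$, $\mu\in\overline{C}\cap X(T)$ with $\mathrm{Stab}_{W_p}(\mu)=\{1,s\}$, and let $w\in W^{I,\lambda}$. If $w\cdot\lambda\in X(T)_+$ then $\lambda\preceq w\cdot\lambda$. Furthermore, if $w\cdot\lambda\in X(T)_+$ then there exist $s_1,\dots,s_n\in S_p$ such that $w=s_1s_2\cdots s_n$, such that $s_1s_2\cdots s_i\cdot\lambda\prec s_1s_2\cdots s_is_{i+1}\cdot\lambda$ for all $0\le i\le n-1$ (for $i=0$ this reads $\lambda\prec s_1\cdot\lambda$), and such that $s_1s_2\cdots s_{i-1}s_is_{i-1}\cdots s_2s_1\notin W_{I,p}$ for all $1\le i\le n$.
   Context: $G$ connected reductive over algebraically closed field of characteristic $p>0$ satisfying Jantzen's standard assumptions, $p\ge h$ (Coxeter number). $T$ a maximal torus with character group $X(T)$, roots $\Phi\supseteq\Phi^+\supseteq\Phi_s$, $\rho$ the half-sum of positive roots. $W_p$ is the affine Weyl group generated by $s_{\alpha,mp}=t_{mp\alpha}s_\alpha$ ($\alpha\in\Phi$, $m\in\mathbb{Z}$), acting on $X(T)\otimes\mathbb{R}$ by $w\cdot\nu=w(\nu+\rho)-\rho$. $C=\{x:0<\langle x+\rho,\alpha^\vee\rangle<p\ \forall\alpha\in\Phi^+\}$, $\overline{C}$ its closure; $S_p\subseteq W_p$ is the set of reflections in the walls of $C$ (the simple reflections). Fix $I\subseteq\Phi_s$; $W_{I,p}$ is generated by $s_\alpha$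 and translations by $mp\alpha$, $\alpha\in I$; $\overline{C}_I=\{x:0\le\langle x+\rho,\alpha^\vee\rangle\le p\ \forall\alpha\in\Phi^+\cap\mathbb{Z}I\}$ and $W^{I,\lambda}=\{w\in W_p:w\cdot\lambda\in\overline{C}_I\}$. $X(T)_+=\{\nu\in X(T):\langle\nu+\rho,\alpha^\vee\rangle\ge0\ \forall\alpha\in\Phi^+\}$. $\preceq$ is the partial order on $X(T)$ given by the transitive closure of $s_{\alpha,mp}\cdot\nu\preceq\nu$ whenever $\alpha\in\Phi^+$, $m\in\mathbb{Z}$, $\langle\nu+\rho,\alpha^\vee\rangle\ge mp$. *)

theory Defs
  imports "HOL-Analysis.Analysis"
begin

text \<open>Combinatorial setting: X(T) tensor R is modelled by a Euclidean space 'a whose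
inner product is a W-invariant form; the coroot pairing is then
<x, alpha^vee> = 2 (x . alpha) / (alpha . alpha).\<close>

definition cop :: "'a::euclidean_space \<Rightarrow> 'a \<Rightarrow> real" where
  "cop x a = 2 * (x \<bullet> a) / (a \<bullet> a)"

definition refl :: "'a::euclidean_space \<Rightarrow> 'a \<Rightarrow> 'a" where
  "refl a x = x - cop x a *\<^sub>R a"

text \<open>s_{alpha, m p} = t_{m p alpha} s_alpha (ordinary action)\<close>
definition aff_refl :: "nat \<Rightarrow> 'a::euclidean_space \<Rightarrow> int \<Rightarrow> 'a \<Rightarrow> 'a" where
  "aff_refl p a m = (\<lambda>x. refl a x + (of_int m * real p) *\<^sub>R a)"

definition transl :: "'a::euclidean_space \<Rightarrow> 'a \<Rightarrow> 'a" where
  "transl v = (\<lambda>x. x + v)"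

definition rho :: "'a::euclidean_space set \<Rightarrow> 'a" where
  "rho Pos = (1/2) *\<^sub>R (\<Sum>a\<in>Pos. a)"

definition dot :: "'a::euclidean_space set \<Rightarrow> ('a \<Rightarrow> 'a) \<Rightarrow> 'a \<Rightarrow> 'a" where
  "dot Pos w x = w (x + rho Pos) - rho Pos"

definition zspan :: "'a::euclidean_space set \<Rightarrow> 'a set" where
  "zspan B = {\<Sum>b\<in>B. of_int (c b) *\<^sub>R b | c. True}"

text \<open>Subgroup (of the group of maps) generated by a set of involutions / invertible maps
closed under inverses: closure under composition, containing the identity.\<close>
inductive_set gen_group :: "('a \<Rightarrow> 'a) set \<Rightarrow> ('a \<Rightarrow> 'a) set" for S where
  gen_id: "id \<in> gen_group S"
| gen_step: "s \<in> S \<Longrightarrow> w \<in> gen_group S \<Longrightarrow> s \<circ> w \<in> gen_group S"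

definition Wp :: "'a::euclidean_space set \<Rightarrow> nat \<Rightarrow> ('a \<Rightarrow> 'a) set" where
  "Wp Phi p = gen_group {aff_refl p a m | a m. a \<in> Phi}"

text \<open>W_{I,p}: generated by s_alpha and translations by m p alpha, alpha in I
(translations by -m p alpha are included, so this is the generated group).\<close>
definition WIp :: "'a::euclidean_space set \<Rightarrow> nat \<Rightarrow> ('a \<Rightarrow> 'a) set" where
  "WIp I p = gen_group ({refl a | a. a \<in> I} \<union>
                        {transl ((of_int m * real p) *\<^sub>R a) | a m. a \<in> I})"

definition alcove :: "'a::euclidean_space set \<Rightarrow> nat \<Rightarrow> 'a set" where
  "alcove Pos p = {x. \<forall>a\<in>Pos. 0 < cop (x + rho Pos) a \<and> cop (x + rho Pos) a < real p}"

definition alcove_cl :: "'a::euclidean_space set \<Rightarrow> nat \<Rightarrow> 'a set" where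
  "alcove_cl Pos p = {x. \<forall>a\<in>Pos. 0 \<le> cop (x + rho Pos) a \<and> cop (x + rho Pos) a \<le> real p}"

text \<open>S_p: reflections in the walls of C. The hyperplane
{x. <x+rho, alpha^vee> = m p} is a wall of C iff it contains a point of the closure of C
lying on no other reflecting hyperplane.\<close>
definition Sp :: "'a::euclidean_space set \<Rightarrow> nat \<Rightarrow> ('a \<Rightarrow> 'a) set" where
  "Sp Pos p = {aff_refl p a m | a m. a \<in> Pos \<and>
      (\<exists>x \<in> alcove_cl Pos p. cop (x + rho Pos) a = of_int m * real p \<and>
          (\<forall>b\<in>Pos. b \<noteq> a \<longrightarrow> 0 < cop (x + rho Pos) b \<and> cop (x + rho Pos) b < real p))}"

definition CI :: "'a::euclidean_space set \<Rightarrow> 'a set \<Rightarrow> nat \<Rightarrow> 'a set" where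
  "CI Pos I p = {x. \<forall>a\<in>Pos \<inter> zspan I.
      0 \<le> cop (x + rho Pos) a \<and> cop (x + rho Pos) a \<le> real p}"

definition WIlam :: "'a::euclidean_space set \<Rightarrow> 'a set \<Rightarrow> 'a set \<Rightarrow> nat \<Rightarrow> 'a \<Rightarrow> ('a \<Rightarrow> 'a) set" where
  "WIlam Phi Pos I p lam = {w \<in> Wp Phi p. dot Pos w lam \<in> CI Pos I p}"

definition dominant :: "'a::euclidean_space set \<Rightarrow> 'a set \<Rightarrow> 'a set" where
  "dominant X Pos = {nu \<in> X. \<forall>a\<in>Pos. cop (nu + rho Pos) a \<ge> 0}"

definition linkage_step :: "'a::euclidean_space set \<Rightarrow> 'a set \<Rightarrow> nat \<Rightarrow> 'a \<Rightarrow> 'a \<Rightarrow> bool" where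
  "linkage_step X Pos p nu' nu \<longleftrightarrow> nu \<in> X \<and>
     (\<exists>a m. a \<in> Pos \<and> cop (nu + rho Pos) a \<ge> of_int m * real p \<and>
            nu' = dot Pos (aff_refl p a m) nu)"

definition preceq :: "'a::euclidean_space set \<Rightarrow> 'a set \<Rightarrow> nat \<Rightarrow> 'a \<Rightarrow> 'a \<Rightarrow> bool" where
  "preceq X Pos p = (linkage_step X Pos p)\<^sup>*\<^sup>*"

definition prec :: "'a::euclidean_space set \<Rightarrow> 'a set \<Rightarrow> nat \<Rightarrow> 'a \<Rightarrow> 'a \<Rightarrow> bool" where
  "prec X Pos p x y \<longleftrightarrow> preceq X Pos p x y \<and> x \<noteq> y"

definition prodl :: "('a \<Rightarrow> 'a) list \<Rightarrow> 'a \<Rightarrow> 'a" where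
  "prodl ss = foldr (\<circ>) ss id"

text \<open>Reduced crystallographic root system Phi in the real span of the character
lattice X, positive system Pos with base Simp, X a full lattice with integral coroot
pairings, and derived group simply connected (fundamental weights lie in X).\<close>
definition std_root_datum :: "'a::euclidean_space set \<Rightarrow> 'a set \<Rightarrow> 'a set \<Rightarrow> 'a set \<Rightarrow> bool" where
  "std_root_datum X Phi Pos Simp \<longleftrightarrow>
     (\<exists>B. independent B \<and> span B = UNIV \<and> X = zspan B) \<and>
     finite Phi \<and> 0 \<notin> Phi \<and> Phi \<subseteq> X \<and>
     (\<forall>x\<in>X. \<forall>a\<in>Phi. cop x a \<in> \<int>) \<and>
     (\<forall>a\<in>Phi. \<forall>b\<in>Phi. refl a b \<in> Phi) \<and>
     (\<forall>a\<in>Phi. \<forall>c::real. c *\<^sub>R a \<in> Phi \<longrightarrow> c = 1 \<or> c = -1) \<and>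
     Pos \<subseteq> Phi \<and> Phi = Pos \<union> uminus ` Pos \<and> Pos \<inter> uminus ` Pos = {} \<and>
     Simp \<subseteq> Pos \<and> independent Simp \<and>
     (\<forall>a\<in>Pos. \<exists>c::'a \<Rightarrow> nat. a = (\<Sum>b\<in>Simp. of_nat (c b) *\<^sub>R b)) \<and>
     (\<forall>a\<in>Simp. \<exists>x\<in>X. \<forall>b\<in>Simp. cop x b = (if b = a then 1 else 0))"

definition coxeter_number :: "'a::euclidean_space set \<Rightarrow> real" where
  "coxeter_number Pos = (if Pos = {} then 1 else Max ((\<lambda>a. cop (rho Pos) a + 1) ` Pos))"

end

theory Submission
  imports Defs
begin

lemma cop_add: "cop (x + y) a = cop x a + cop y a"
  unfolding cop_def by (simp add: inner_add_left add_divide_distrib distrib_left)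
lemma cop_diff: "cop (x - y) a = cop x a - cop y a"
  unfolding cop_def by (simp add: inner_diff_left diff_divide_distrib right_diff_distrib)
lemma cop_scale: "cop (c *\<^sub>R x) a = c * cop x a"
  unfolding cop_def by simp
lemma cop_uminus: "cop (- x) a = - cop x a"
  unfolding cop_def by simp
lemma cop_neg_root: "cop x (- a) = - cop x a"
  unfolding cop_def by simp
lemma cop_zero: "cop 0 a = 0"
  unfolding cop_def by simp
lemma cop_self: "a \<noteq> 0 \<Longrightarrow> cop a a = 2"
  unfolding cop_def by simp
lemma cop_sum: "cop (sum f S) a = (\<Sum>x\<in>S. cop (f x) a)"
  by (induction S rule: infinite_finite_induct) (auto simp: cop_add cop_zero)
lemma cop_inner: "cop x a = (2 / (a \<bullet> a)) * (a \<bullet> x)"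
  unfolding cop_def by (simp add: inner_commute)

lemma refl_add: "refl a (x + y) = refl a x + refl a y"
  unfolding refl_def by (simp add: cop_add algebra_simps)
lemma refl_diff: "refl a (x - y) = refl a x - refl a y"
  unfolding refl_def by (simp add: cop_diff algebra_simps)
lemma refl_scale: "refl a (c *\<^sub>R x) = c *\<^sub>R refl a x"
  unfolding refl_def by (simp add: cop_scale algebra_simps)
lemma refl_uminus: "refl a (- x) = - refl a x"
  unfolding refl_def by (simp add: cop_uminus algebra_simps)
lemma refl_self: "a \<noteq> 0 \<Longrightarrow> refl a a = - a"
  unfolding refl_def by (simp add: cop_self scaleR_2)
lemma refl_refl: "a \<noteq> 0 \<Longrightarrow> refl a (refl a x) = x"
  unfolding refl_def by (simp add: cop_add cop_diff cop_scale cop_self algebra_simps)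
lemma inner_refl: "a \<noteq> 0 \<Longrightarrow> refl a x \<bullet> refl a y = x \<bullet> y"
  unfolding refl_def cop_def
  by (simp add: inner_diff_left inner_diff_right inner_commute field_simps)
lemma cop_refl: assumes "a \<noteq> 0" shows "cop (refl a x) b = cop x (refl a b)"
proof -
  have "refl a x \<bullet> b = x \<bullet> refl a b"
    unfolding refl_def cop_def using assms
    by (simp add: inner_diff_left inner_diff_right inner_commute field_simps)
  moreover have "refl a b \<bullet> refl a b = b \<bullet> b" using inner_refl[OF assms] by simp
  ultimately show ?thesis unfolding cop_def by simp
qed
lemma refl_zero_iff: "a \<noteq> 0 \<Longrightarrow> refl a x = 0 \<longleftrightarrow> x = 0"
  by (metis refl_refl refl_scale scale_zero_left)

lemma aff_refl_eq: "aff_refl p a m y = y - (cop y a - of_int m * real p) *\<^sub>R a"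
  unfolding aff_refl_def refl_def by (simp add: algebra_simps)
lemma aff_refl_invol: "a \<noteq> 0 \<Longrightarrow> aff_refl p a m (aff_refl p a m y) = y"
  unfolding aff_refl_eq by (simp add: cop_add cop_diff cop_scale cop_self algebra_simps)
lemma aff_refl_comp: "a \<noteq> 0 \<Longrightarrow> aff_refl p a m \<circ> aff_refl p a m = id"
  by (rule ext) (simp add: aff_refl_invol)
lemma aff_refl_neg: "aff_refl p (- a) (- m) = aff_refl p a m"
  unfolding aff_refl_eq by (rule ext) (simp add: cop_neg_root algebra_simps)
lemma cop_aff_refl_self: "a \<noteq> 0 \<Longrightarrow> cop (aff_refl p a m y) a = 2 * (of_int m * real p) - cop y a"
  unfolding aff_refl_eq by (simp add: cop_add cop_diff cop_scale cop_self algebra_simps)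
lemma aff_refl_add: "aff_refl p a m (y + v) = aff_refl p a m y + refl a v"
  unfolding aff_refl_def by (simp add: refl_add)
lemma aff_refl_fix_iff: "a \<noteq> 0 \<Longrightarrow> aff_refl p a m y = y \<longleftrightarrow> cop y a = of_int m * real p"
  unfolding aff_refl_eq by simp
lemma aff_refl_affine: "aff_refl p a m ((1 - t) *\<^sub>R x + t *\<^sub>R y) = (1 - t) *\<^sub>R aff_refl p a m x + t *\<^sub>R aff_refl p a m y"
  by (simp only: aff_refl_eq cop_add cop_scale cop_diff) (simp add: algebra_simps)


lemma real_sep_iff:
  fixes f0 f1 :: real
  shows "f0 * f1 < 0 \<longleftrightarrow> f0 \<noteq> 0 \<and> f1 \<noteq> 0 \<and> (\<exists>t\<in>{0..1}. (1 - t) * f0 + t * f1 = 0)"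
proof
  assume h: "f0 * f1 < 0"
  hence "f0 \<noteq> 0" "f1 \<noteq> 0" "f0 - f1 \<noteq> 0" by (auto simp: mult_less_0_iff)
  moreover
  have "f0 / (f0 - f1) \<in> {0..1}" using h
    by (auto simp: mult_less_0_iff divide_simps)
  moreover have "(1 - f0 / (f0 - f1)) * f0 + f0 / (f0 - f1) * f1 = 0"
    using \<open>f0 - f1 \<noteq> 0\<close> by (simp add: field_simps)
  ultimately show "f0 \<noteq> 0 \<and> f1 \<noteq> 0 \<and> (\<exists>t\<in>{0..1}. (1 - t) * f0 + t * f1 = 0)" by blast
next
  assume "f0 \<noteq> 0 \<and> f1 \<noteq> 0 \<and> (\<exists>t\<in>{0..1}. (1 - t) * f0 + t * f1 = 0)"
  then obtain t where t: "0 \<le> t" "t \<le> 1" "(1 - t) * f0 + t * f1 = 0" and nz: "f0 \<noteq> 0" "f1 \<noteq> 0" by auto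
  show "f0 * f1 < 0"
  proof (rule ccontr)
    assume "\<not> f0 * f1 < 0"
    hence "(f0 > 0 \<and> f1 > 0) \<or> (f0 < 0 \<and> f1 < 0)" using nz
      by (metis linorder_neqE_linordered_idom mult_neg_pos mult_pos_neg)
    thus False
    proof
      assume "f0 > 0 \<and> f1 > 0"
      hence "(1 - t) * f0 \<ge> 0" "t * f1 \<ge> 0" using t by auto
      moreover have "(1 - t) * f0 > 0 \<or> t * f1 > 0" using \<open>f0 > 0 \<and> f1 > 0\<close> t
        by (cases "t = 1") auto
      ultimately show False using t(3) by linarith
    next
      assume "f0 < 0 \<and> f1 < 0"
      hence "(1 - t) * f0 \<le> 0" "t * f1 \<le> 0" using t by (auto simp: mult_nonneg_nonpos mult_nonpos_nonneg)
      moreover have "(1 - t) * f0 < 0 \<or> t * f1 < 0" using \<open>f0 < 0 \<and> f1 < 0\<close> t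
        by (cases "t = 1") (auto simp: mult_pos_neg)
      ultimately show False using t(3) by linarith
    qed
  qed
qed

lemma sign3: fixes u v w :: real
  assumes "u \<noteq> 0" "v \<noteq> 0" "w \<noteq> 0"
  shows "u * w < 0 \<longleftrightarrow> (u * v < 0 \<longleftrightarrow> \<not> v * w < 0)"
  using assms by (cases "u > 0"; cases "v > 0"; cases "w > 0")
    (auto simp: mult_pos_pos mult_neg_neg mult_pos_neg mult_neg_pos mult_less_0_iff)

lemma cop_comb: "cop ((1 - t) *\<^sub>R y + t *\<^sub>R z) b = (1 - t) * cop y b + t * cop z b"
  by (simp add: cop_add cop_scale)

lemma gen_group_comp: "u \<in> gen_group S \<Longrightarrow> v \<in> gen_group S \<Longrightarrow> u \<circ> v \<in> gen_group S"
proof (induction u rule: gen_group.induct)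
  case gen_id thus ?case by simp
next
  case (gen_step s w) thus ?case by (metis comp_assoc gen_group.gen_step)
qed

lemma gen_group_gen: "s \<in> S \<Longrightarrow> s \<in> gen_group S"
  using gen_group.gen_step[OF _ gen_group.gen_id, of s S] by simp

lemma gen_group_mono: "u \<in> gen_group S \<Longrightarrow> S \<subseteq> T \<Longrightarrow> u \<in> gen_group T"
  by (induction u rule: gen_group.induct) (auto intro: gen_group.intros)

locale rs =
  fixes Phi Pos :: "'a::euclidean_space set" and p :: nat
  assumes finPhi: "finite Phi" and zeroPhi: "0 \<notin> Phi"
    and reflPhi: "\<And>a b. a \<in> Phi \<Longrightarrow> b \<in> Phi \<Longrightarrow> refl a b \<in> Phi"
    and reduced: "\<And>a c. a \<in> Phi \<Longrightarrow> c *\<^sub>R a \<in> Phi \<Longrightarrow> c = 1 \<or> c = -1"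
    and intPhi: "\<And>a b. a \<in> Phi \<Longrightarrow> b \<in> Phi \<Longrightarrow> cop a b \<in> \<int>"
    and PosPhi: "Pos \<subseteq> Phi" and PhiPos: "Phi = Pos \<union> uminus ` Pos"
    and disjPos: "Pos \<inter> uminus ` Pos = {}"
    and ppos: "p > 0"
begin

definition hyp :: "'a \<Rightarrow> int \<Rightarrow> 'a set" where
  "hyp b k = {y. cop y b = of_int k * real p}"

definition HYP :: "'a set set" where
  "HYP = {hyp b k | b k. b \<in> Phi}"

definition sepH :: "'a set \<Rightarrow> 'a \<Rightarrow> 'a \<Rightarrow> bool" where
  "sepH H y z \<longleftrightarrow> y \<notin> H \<and> z \<notin> H \<and> (\<exists>t\<in>{0..1}. (1 - t) *\<^sub>R y + t *\<^sub>R z \<in> H)"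

definition Sep :: "'a \<Rightarrow> 'a \<Rightarrow> 'a set set" where
  "Sep y z = {H \<in> HYP. sepH H y z}"

definition gen :: "'a \<Rightarrow> bool" where
  "gen y \<longleftrightarrow> (\<forall>H\<in>HYP. y \<notin> H)"

lemma nonzero: "a \<in> Phi \<Longrightarrow> a \<noteq> 0" using zeroPhi by auto
lemma Pos_nonzero: "a \<in> Pos \<Longrightarrow> a \<noteq> 0" using zeroPhi PosPhi by auto
lemma neg_Phi: "a \<in> Phi \<Longrightarrow> - a \<in> Phi"
  using PhiPos by (auto simp: image_iff)
lemma Phi_cases: "a \<in> Phi \<Longrightarrow> a \<in> Pos \<or> - a \<in> Pos"
  using PhiPos by (auto simp: image_iff)
lemma Pos_neg_not: "a \<in> Pos \<Longrightarrow> - a \<notin> Pos"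
  using disjPos by (auto simp: image_iff)

lemma sep_hyp: "b \<noteq> 0 \<Longrightarrow> sepH (hyp b k) y z \<longleftrightarrow>
    (cop y b - of_int k * real p) * (cop z b - of_int k * real p) < 0"
proof -
  have e: "((1 - t) *\<^sub>R y + t *\<^sub>R z \<in> hyp b k) \<longleftrightarrow>
     (1 - t) * (cop y b - of_int k * real p) + t * (cop z b - of_int k * real p) = 0" for t
    by (simp only: hyp_def mem_Collect_eq cop_comb) (simp add: algebra_simps)
  show ?thesis unfolding sepH_def real_sep_iff e by (simp add: hyp_def)
qed

lemma hyp_neg: "hyp (- b) (- k) = hyp b k"
  unfolding hyp_def by (auto simp: cop_neg_root)

lemma HYP_Pos: "H \<in> HYP \<Longrightarrow> \<exists>b\<in>Pos. \<exists>k. H = hyp b k"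
proof -
  assume "H \<in> HYP"
  then obtain b k where "b \<in> Phi" "H = hyp b k" unfolding HYP_def by auto
  show ?thesis
  proof (cases "b \<in> Pos")
    case True thus ?thesis using \<open>H = hyp b k\<close> by blast
  next
    case False
    hence "- b \<in> Pos" using Phi_cases \<open>b \<in> Phi\<close> by blast
    moreover have "H = hyp (- b) (- k)" using \<open>H = hyp b k\<close> hyp_neg by simp
    ultimately show ?thesis by blast
  qed
qed

lemma hyp_in_HYP: "b \<in> Phi \<Longrightarrow> hyp b k \<in> HYP" unfolding HYP_def by auto

lemma gen_iff: "gen y \<longleftrightarrow> (\<forall>b\<in>Pos. \<forall>k. cop y b \<noteq> of_int k * real p)"
proof
  assume g: "gen y"
  show "\<forall>b\<in>Pos. \<forall>k. cop y b \<noteq> of_int k * real p"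
  proof (intro ballI allI notI)
    fix b k assume b: "b \<in> Pos" and c: "cop y b = of_int k * real p"
    have "hyp b k \<in> HYP" using hyp_in_HYP PosPhi b by auto
    moreover have "y \<in> hyp b k" using c by (simp add: hyp_def)
    ultimately show False using g unfolding gen_def by blast
  qed
next
  assume h: "\<forall>b\<in>Pos. \<forall>k. cop y b \<noteq> of_int k * real p"
  show "gen y" unfolding gen_def
  proof
    fix H assume "H \<in> HYP"
    then obtain b k where "b \<in> Pos" "H = hyp b k" using HYP_Pos by blast
    thus "y \<notin> H" using h unfolding hyp_def by auto
  qed
qed

lemma Sep_hyp_iff: "b \<in> Phi \<Longrightarrow> hyp b k \<in> Sep y z \<longleftrightarrow>
    (cop y b - of_int k * real p) * (cop z b - of_int k * real p) < 0"
  unfolding Sep_def mem_Collect_eq using sep_hyp[OF nonzero] hyp_in_HYP by simp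

lemma Sep_sym: "Sep y z = Sep z y"
proof -
  have "sepH H y z \<longleftrightarrow> sepH H z y" if hH: "H \<in> HYP" for H
  proof -
    obtain b k where "b \<in> Pos" "H = hyp b k" using hH HYP_Pos by blast
    thus ?thesis using sep_hyp[OF Pos_nonzero] by (simp add: mult.commute)
  qed
  thus ?thesis unfolding Sep_def by auto
qed

lemma Sep_finite: "finite (Sep y z)"
proof -
  define N where "N b = ceiling ((\<bar>cop y b\<bar> + \<bar>cop z b\<bar>) / real p)" for b
  have "Sep y z \<subseteq> (\<Union>b\<in>Phi. hyp b ` {- N b .. N b})"
  proof
    fix H assume H: "H \<in> Sep y z"
    have "H \<in> HYP" using H unfolding Sep_def by auto
    then obtain b k where b: "b \<in> Pos" "H = hyp b k" using HYP_Pos by blast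
    have bP: "b \<in> Phi" using b PosPhi by auto
    have neg: "(cop y b - of_int k * real p) * (cop z b - of_int k * real p) < 0"
      using H b Sep_hyp_iff[OF bP] by auto
    have "(cop y b - of_int k * real p > 0 \<and> cop z b - of_int k * real p < 0) \<or>
          (cop y b - of_int k * real p < 0 \<and> cop z b - of_int k * real p > 0)"
      using neg by (simp add: mult_less_0_iff)
    hence "\<bar>of_int k * real p\<bar> \<le> \<bar>cop y b\<bar> + \<bar>cop z b\<bar>" by arith
    hence "\<bar>real_of_int k\<bar> * real p \<le> \<bar>cop y b\<bar> + \<bar>cop z b\<bar>" by (simp only: abs_mult abs_of_nat)
    hence "real_of_int \<bar>k\<bar> \<le> (\<bar>cop y b\<bar> + \<bar>cop z b\<bar>) / real p"
      using ppos by (simp only: pos_le_divide_eq of_nat_0_less_iff of_int_abs)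
    hence "ceiling (real_of_int \<bar>k\<bar>) \<le> N b" unfolding N_def by (rule ceiling_mono)
    hence "\<bar>k\<bar> \<le> N b" by (simp only: ceiling_of_int)
    hence "k \<in> {- N b .. N b}" by arith
    thus "H \<in> (\<Union>b\<in>Phi. hyp b ` {- N b .. N b})" using bP b by blast
  qed
  moreover have "finite (\<Union>b\<in>Phi. hyp b ` {- N b .. N b})" using finPhi by blast
  ultimately show ?thesis by (rule finite_subset)
qed

lemma Sep_trans:
  assumes "gen x" "gen y" "gen z"
  shows "H \<in> Sep x z \<longleftrightarrow> (H \<in> Sep x y \<longleftrightarrow> H \<notin> Sep y z)"
proof (cases "H \<in> HYP")
  case True
  then obtain b k where b: "b \<in> Pos" "H = hyp b k" using HYP_Pos by blast
  have bP: "b \<in> Phi" using b PosPhi by auto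
  have nz: "cop x b - of_int k * real p \<noteq> 0" "cop y b - of_int k * real p \<noteq> 0"
     "cop z b - of_int k * real p \<noteq> 0" using assms b unfolding gen_iff by auto
  show ?thesis unfolding b(2) Sep_hyp_iff[OF bP] using nz sign3 by blast
next
  case False thus ?thesis unfolding Sep_def by auto
qed

end

context rs begin

lemma Wp_induct[consumes 1, case_names id step]:
  assumes "w \<in> Wp Phi p" "P id"
    "\<And>a m w. a \<in> Phi \<Longrightarrow> w \<in> Wp Phi p \<Longrightarrow> P w \<Longrightarrow> P (aff_refl p a m \<circ> w)"
  shows "P w"
  using assms(1) unfolding Wp_def
proof (induction w rule: gen_group.induct)
  case gen_id show ?case by (rule assms(2))
next
  case (gen_step s w) thus ?case using assms(3) unfolding Wp_def by blast
qed

lemma Wp_id: "id \<in> Wp Phi p" unfolding Wp_def by (rule gen_group.gen_id)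
lemma Wp_gen: "a \<in> Phi \<Longrightarrow> aff_refl p a m \<in> Wp Phi p"
  unfolding Wp_def by (rule gen_group_gen) blast
lemma Wp_comp: "u \<in> Wp Phi p \<Longrightarrow> v \<in> Wp Phi p \<Longrightarrow> u \<circ> v \<in> Wp Phi p"
  unfolding Wp_def by (rule gen_group_comp)

lemma Wp_inv: "w \<in> Wp Phi p \<Longrightarrow> \<exists>w'\<in>Wp Phi p. w \<circ> w' = id \<and> w' \<circ> w = id"
proof (induction w rule: Wp_induct)
  case id show ?case by (rule bexI[of _ id]) (simp_all add: Wp_id)
next
  case (step a m w)
  then obtain w' where w': "w' \<in> Wp Phi p" "w \<circ> w' = id" "w' \<circ> w = id" by blast
  have r: "aff_refl p a m \<circ> aff_refl p a m = id" using aff_refl_comp nonzero step(1) by blast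
  have "w' \<circ> aff_refl p a m \<in> Wp Phi p" using Wp_comp Wp_gen w'(1) step(1) by blast
  moreover have "(aff_refl p a m \<circ> w) \<circ> (w' \<circ> aff_refl p a m) = id"
    by (metis comp_assoc id_comp r w'(2))
  moreover have "(w' \<circ> aff_refl p a m) \<circ> (aff_refl p a m \<circ> w) = id"
    by (metis comp_assoc id_comp r w'(3))
  ultimately show ?case by blast
qed

lemma Wp_affine: "w \<in> Wp Phi p \<Longrightarrow> w ((1 - t) *\<^sub>R x + t *\<^sub>R y) = (1 - t) *\<^sub>R w x + t *\<^sub>R w y"
proof (induction w rule: Wp_induct)
  case id thus ?case by simp
next
  case (step a m w) thus ?case by (simp add: aff_refl_affine)
qed

lemma Wp_inj: "w \<in> Wp Phi p \<Longrightarrow> inj w"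
  using Wp_inv by (metis inj_on_id inj_on_imageI2 image_comp image_id)

lemma Wp_invol_fun: assumes "w \<in> Wp Phi p" "w' \<in> Wp Phi p" "w \<circ> w' = id" "w' \<circ> w = id"
  shows "w' (w x) = x" "w (w' x) = x"
  using assms by (metis comp_apply id_apply)+

lemma cop_a_refl: "a \<noteq> 0 \<Longrightarrow> cop a (refl a b) = - cop a b"
proof -
  assume a: "a \<noteq> 0"
  have "cop (refl a (refl a a)) b = cop (refl a a) (refl a b)" by (rule cop_refl[OF a])
  thus ?thesis using a by (simp add: refl_refl refl_self refl_uminus cop_uminus)
qed

lemma K: assumes a: "a \<in> Phi"
  shows "cop (aff_refl p a m y) (refl a b) = cop y b - of_int m * real p * cop a b"
proof -
  have a0: "a \<noteq> 0" using nonzero a by blast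
  have "cop (aff_refl p a m y) (refl a b) = cop (refl a y) (refl a b) + of_int m * real p * cop a (refl a b)"
    unfolding aff_refl_def by (simp add: cop_add cop_scale)
  also have "cop (refl a y) (refl a b) = cop y b" using cop_refl[OF a0] refl_refl[OF a0] by simp
  also have "cop a (refl a b) = - cop a b" by (rule cop_a_refl[OF a0])
  finally show ?thesis by simp
qed

lemma invol_image: assumes "\<And>x. r (r x) = x" shows "r ` H = {z. r z \<in> H}"
  using assms by (auto simp: image_iff) (metis)

lemma conj_gen:
  assumes a: "a \<in> Phi" and b: "b \<in> Phi"
  shows "\<exists>c\<in>Phi. \<exists>k'. aff_refl p a m ` hyp b k = hyp c k' \<and>
           aff_refl p a m \<circ> aff_refl p b k = aff_refl p c k' \<circ> aff_refl p a m"
proof -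
  have a0: "a \<noteq> 0" using nonzero a by blast
  obtain n where n: "cop a b = of_int n" using intPhi[OF a b] Ints_cases by blast
  define c where "c = refl a b"
  define k' where "k' = k - m * n"
  have cP: "c \<in> Phi" unfolding c_def using reflPhi a b by blast
  let ?r = "aff_refl p a m"
  have rr: "?r (?r x) = x" for x using aff_refl_invol[OF a0] .
  have Kc: "cop (?r y) c = cop y b - of_int m * real p * of_int n" for y
    unfolding c_def using K[OF a, of m y b] n by simp
  have "?r ` hyp b k = hyp c k'"
  proof -
    have "?r ` hyp b k = {z. ?r z \<in> hyp b k}" by (rule invol_image[OF rr])
    also have "\<dots> = hyp c k'"
    proof -
      have "cop z c = cop (?r z) b - of_int m * real p * of_int n" for z
        using Kc[of "?r z"] rr by simp
      thus ?thesis unfolding hyp_def k'_def by (auto simp: algebra_simps)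
    qed
    finally show ?thesis .
  qed
  moreover have "?r \<circ> aff_refl p b k = aff_refl p c k' \<circ> ?r"
  proof
    fix y
    have "aff_refl p b k y = y + (of_int k * real p - cop y b) *\<^sub>R b"
      by (simp add: aff_refl_eq algebra_simps)
    hence "?r (aff_refl p b k y) = ?r y + refl a ((of_int k * real p - cop y b) *\<^sub>R b)"
      by (simp add: aff_refl_add)
    also have "\<dots> = ?r y - (cop y b - of_int k * real p) *\<^sub>R c"
      unfolding c_def refl_scale by (simp add: algebra_simps)
    also have "\<dots> = aff_refl p c k' (?r y)"
    proof -
      have "aff_refl p c k' (?r y) = ?r y - (cop (?r y) c - of_int k' * real p) *\<^sub>R c"
        by (rule aff_refl_eq)
      thus ?thesis unfolding Kc k'_def by (simp add: algebra_simps)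
    qed
    finally show "(?r \<circ> aff_refl p b k) y = (aff_refl p c k' \<circ> ?r) y" by simp
  qed
  ultimately show ?thesis using cP by blast
qed

lemma Wp_conj:
  assumes "w \<in> Wp Phi p"
  shows "b \<in> Phi \<Longrightarrow> \<exists>c\<in>Phi. \<exists>k'. w ` hyp b k = hyp c k' \<and>
           w \<circ> aff_refl p b k = aff_refl p c k' \<circ> w"
  using assms
proof (induction w arbitrary: b k rule: Wp_induct)
  case id thus ?case by auto
next
  case (step a m w)
  obtain c k' where c: "c \<in> Phi" "w ` hyp b k = hyp c k'"
    "w \<circ> aff_refl p b k = aff_refl p c k' \<circ> w" using step by blast
  obtain d k'' where d: "d \<in> Phi" "aff_refl p a m ` hyp c k' = hyp d k''"
    "aff_refl p a m \<circ> aff_refl p c k' = aff_refl p d k'' \<circ> aff_refl p a m"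
    using conj_gen[OF step(1) c(1)] by blast
  have "(aff_refl p a m \<circ> w) ` hyp b k = hyp d k''"
    using c(2) d(2) image_comp[of "aff_refl p a m" w "hyp b k"] by simp
  moreover have "(aff_refl p a m \<circ> w) \<circ> aff_refl p b k = aff_refl p d k'' \<circ> (aff_refl p a m \<circ> w)"
    by (metis c(3) d(3) comp_assoc)
  ultimately show ?case using d(1) by blast
qed

lemma Wp_HYP: "w \<in> Wp Phi p \<Longrightarrow> H \<in> HYP \<Longrightarrow> w ` H \<in> HYP"
  unfolding HYP_def using Wp_conj by blast

lemma Wp_sepH: assumes w: "w \<in> Wp Phi p"
  shows "sepH (w ` H) (w y) (w z) \<longleftrightarrow> sepH H y z"
proof -
  have i: "inj w" using Wp_inj[OF w] .
  have "((1 - t) *\<^sub>R w y + t *\<^sub>R w z \<in> w ` H) \<longleftrightarrow> ((1 - t) *\<^sub>R y + t *\<^sub>R z \<in> H)" for t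
    using Wp_affine[OF w, of t y z, symmetric] inj_image_mem_iff[OF i] by simp
  thus ?thesis unfolding sepH_def using inj_image_mem_iff[OF i] by simp
qed

lemma Wp_Sep: assumes w: "w \<in> Wp Phi p"
  shows "Sep (w y) (w z) = (\<lambda>H. w ` H) ` Sep y z"
proof
  show "(\<lambda>H. w ` H) ` Sep y z \<subseteq> Sep (w y) (w z)"
    unfolding Sep_def using Wp_HYP[OF w] Wp_sepH[OF w] by auto
next
  show "Sep (w y) (w z) \<subseteq> (\<lambda>H. w ` H) ` Sep y z"
  proof
    fix H' assume H': "H' \<in> Sep (w y) (w z)"
    obtain w' where w': "w' \<in> Wp Phi p" "w \<circ> w' = id" "w' \<circ> w = id" using Wp_inv[OF w] by blast
    have e: "w ` (w' ` H') = H'" using w'(2) by (simp add: image_comp)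
    have "w' ` H' \<in> HYP" using H' Wp_HYP[OF w'(1)] unfolding Sep_def by auto
    moreover have "sepH (w' ` H') y z" using H' Wp_sepH[OF w, of "w' ` H'"] e unfolding Sep_def by auto
    ultimately have "w' ` H' \<in> Sep y z" unfolding Sep_def by auto
    thus "H' \<in> (\<lambda>H. w ` H) ` Sep y z" using e by (metis image_eqI)
  qed
qed

lemma Wp_Sep_card: assumes w: "w \<in> Wp Phi p"
  shows "card (Sep (w y) (w z)) = card (Sep y z)"
proof -
  have "inj (\<lambda>H. w ` H)" using Wp_inj[OF w] by (simp add: inj_def inj_image_eq_iff)
  thus ?thesis unfolding Wp_Sep[OF w] by (simp add: card_image inj_on_subset)
qed

lemma Wp_gen_pt: assumes w: "w \<in> Wp Phi p" and g: "gen y" shows "gen (w y)"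
  unfolding gen_def
proof
  fix H assume H: "H \<in> HYP"
  obtain w' where w': "w' \<in> Wp Phi p" "w \<circ> w' = id" "w' \<circ> w = id" using Wp_inv[OF w] by blast
  show "w y \<notin> H"
  proof
    assume "w y \<in> H"
    hence "w' (w y) \<in> w' ` H" by blast
    hence "y \<in> w' ` H" using w'(3) by (metis comp_apply id_apply)
    moreover have "w' ` H \<in> HYP" using Wp_HYP[OF w'(1) H] .
    ultimately show False using g unfolding gen_def by blast
  qed
qed

lemma hyp_unique:
  assumes b: "b \<in> Phi" and c: "c \<in> Phi" and e: "hyp b k = hyp c k'"
  shows "aff_refl p b k = aff_refl p c k'"
proof -
  have b0: "b \<noteq> 0" using nonzero b by blast
  have c0: "c \<noteq> 0" using nonzero c by blast
  define y1 where "y1 = (of_int k * real p / 2) *\<^sub>R b"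
  have y1: "y1 \<in> hyp b k" unfolding y1_def hyp_def using b0 by (simp add: cop_scale cop_self)
  define \<kappa> where "\<kappa> = (c \<bullet> b) / (b \<bullet> b)"
  define v where "v = c - \<kappa> *\<^sub>R b"
  have vb: "v \<bullet> b = 0" unfolding v_def \<kappa>_def using b0 by (simp add: inner_diff_left)
  have "cop v b = 0" unfolding cop_def using vb by (simp add: inner_commute)
  hence "y1 + v \<in> hyp b k" using y1 unfolding hyp_def by (simp add: cop_add)
  hence "y1 + v \<in> hyp c k'" "y1 \<in> hyp c k'" using e y1 by auto
  hence "cop v c = 0" unfolding hyp_def by (simp add: cop_add)
  hence vc: "v \<bullet> c = 0" unfolding cop_def using c0 by simp
  have "v \<bullet> v = v \<bullet> c - \<kappa> * (v \<bullet> b)" unfolding v_def by (simp add: inner_diff_right)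
  hence "v = 0" using vb vc by simp
  hence cb: "c = \<kappa> *\<^sub>R b" unfolding v_def by simp
  hence "\<kappa> = 1 \<or> \<kappa> = -1" using reduced[OF b] c by simp
  thus ?thesis
  proof
    assume "\<kappa> = 1"
    hence cb1: "c = b" using cb by simp
    have y1c: "y1 \<in> hyp c k'" using y1 e by simp
    have "cop y1 b = of_int k * real p" using y1 unfolding hyp_def by simp
    moreover have "cop y1 b = of_int k' * real p" using y1c cb1 unfolding hyp_def by simp
    ultimately have "real_of_int k * real p = real_of_int k' * real p" by linarith
    hence "real_of_int k = real_of_int k'" using ppos by simp
    hence "k = k'" by simp
    thus ?thesis using cb1 by simp
  next
    assume "\<kappa> = -1"
    hence cb1: "c = - b" using cb by simp
    have y1c: "y1 \<in> hyp c k'" using y1 e by simp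
    have "cop y1 b = of_int k * real p" using y1 unfolding hyp_def by simp
    moreover have "cop y1 (- b) = of_int k' * real p" using y1c cb1 unfolding hyp_def by simp
    ultimately have "real_of_int k' * real p = real_of_int (- k) * real p" unfolding cop_neg_root by simp
    hence "real_of_int k' * real p = real_of_int (- k) * real p" by simp
    hence "real_of_int k' = real_of_int (- k)" using ppos by (metis mult_cancel_right of_nat_0_less_iff less_irrefl)
    hence "k' = - k" by simp
    thus ?thesis using cb1 aff_refl_neg[of p b k] by simp
  qed
qed

lemma normalize:
  assumes "c \<in> Phi"
  shows "\<exists>c'\<in>Pos. \<exists>k'. hyp c k = hyp c' k' \<and> aff_refl p c k = aff_refl p c' k'"
proof (cases "c \<in> Pos")
  case True thus ?thesis by blast
next
  case False
  hence "- c \<in> Pos" using Phi_cases assms by blast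
  moreover have "hyp c k = hyp (- c) (- k)" "aff_refl p c k = aff_refl p (- c) (- k)"
    using hyp_neg[of c k] aff_refl_neg[of p c k] by simp_all
  ultimately show ?thesis by blast
qed

end

lemma ev_pick: "eventually P (at_right (0::real)) \<Longrightarrow> \<exists>t>0. P t"
proof -
  assume "eventually P (at_right (0::real))"
  then obtain b where b: "b > 0" "\<forall>y>0. y < b \<longrightarrow> P y" unfolding eventually_at_right_field by auto
  thus ?thesis by (intro exI[of _ "b/2"]) auto
qed

lemma ev_lin: fixes c d lo hi :: real
  assumes "lo < c" "c < hi"
  shows "eventually (\<lambda>t. lo < c + t * d \<and> c + t * d < hi) (at_right 0)"
proof -
  have "((\<lambda>t. c + t * d) \<longlongrightarrow> c + 0 * d) (at_right 0)"
    by (intro tendsto_intros)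
  hence l: "((\<lambda>t. c + t * d) \<longlongrightarrow> c) (at_right 0)" by simp
  show ?thesis using order_tendstoD(1)[OF l assms(1)] order_tendstoD(2)[OF l assms(2)]
    by (rule eventually_conj)
qed

lemma ev_ne: fixes g e :: real
  assumes "g \<noteq> 0 \<or> e \<noteq> 0"
  shows "eventually (\<lambda>t. g + t * e \<noteq> 0) (at_right 0)"
proof (cases "g = 0")
  case True
  hence "e \<noteq> 0" using assms by simp
  show ?thesis using eventually_at_right_less[of "0::real"]
    by eventually_elim (use True \<open>e \<noteq> 0\<close> in simp)
next
  case False
  show ?thesis
  proof (cases "g > 0")
    case True
    have "eventually (\<lambda>t. 0 < g + t * e \<and> g + t * e < g + 1) (at_right 0)"
      using ev_lin[of 0 g "g + 1" e] True by simp
    thus ?thesis by (rule eventually_mono) auto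
  next
    case f: False
    hence "g < 0" using False by simp
    have "eventually (\<lambda>t. g - 1 < g + t * e \<and> g + t * e < 0) (at_right 0)"
      using ev_lin[of "g - 1" g 0 e] \<open>g < 0\<close> by simp
    thus ?thesis by (rule eventually_mono) auto
  qed
qed

lemma ev_lt1: "eventually (\<lambda>t. t < (1::real)) (at_right 0)"
  unfolding eventually_at_right_field by (intro exI[of _ 1]) auto

lemma ev_pos: "eventually (\<lambda>t. t > (0::real)) (at_right 0)"
  by (rule eventually_at_right_less)

lemma avoid_vec:
  fixes D :: "'a::real_inner set"
  assumes "finite D" "0 \<notin> D"
  shows "\<exists>v. \<forall>d\<in>D. v \<bullet> d \<noteq> 0"
  using assms
proof (induction D rule: finite_induct)
  case empty thus ?case by simp
next
  case (insert d D)
  then obtain v where v: "\<forall>d'\<in>D. v \<bullet> d' \<noteq> 0" by auto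
  have d0: "d \<noteq> 0" using insert by auto
  show ?case
  proof (cases "v \<bullet> d = 0")
    case False thus ?thesis using v by auto
  next
    case True
    have "\<forall>d'\<in>D. eventually (\<lambda>t. v \<bullet> d' + t * (d \<bullet> d') \<noteq> 0) (at_right 0)"
    proof
      fix d' assume "d' \<in> D"
      hence "v \<bullet> d' \<noteq> 0" using v by blast
      thus "eventually (\<lambda>t. v \<bullet> d' + t * (d \<bullet> d') \<noteq> 0) (at_right 0)" by (intro ev_ne) simp
    qed
    hence "eventually (\<lambda>t. \<forall>d'\<in>D. v \<bullet> d' + t * (d \<bullet> d') \<noteq> 0) (at_right 0)"
      by (rule eventually_ball_finite[OF insert(1)])
    hence "eventually (\<lambda>t. t > 0 \<and> (\<forall>d'\<in>D. v \<bullet> d' + t * (d \<bullet> d') \<noteq> 0)) (at_right 0)"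
      by (rule eventually_conj[OF ev_pos])
    from ev_pick[OF this] obtain t where t: "t > 0" "\<forall>d'\<in>D. v \<bullet> d' + t * (d \<bullet> d') \<noteq> 0" by blast
    have "(v + t *\<^sub>R d) \<bullet> d \<noteq> 0" using True t(1) d0 by (simp add: inner_add_left)
    moreover have "\<forall>d'\<in>D. (v + t *\<^sub>R d) \<bullet> d' \<noteq> 0" using t(2) by (simp add: inner_add_left)
    ultimately show ?thesis by blast
  qed
qed

context rs begin

definition A :: "'a set" where
  "A = {y. \<forall>b\<in>Pos. 0 < cop y b \<and> cop y b < real p}"

definition wall :: "'a \<Rightarrow> int \<Rightarrow> bool" where
  "wall a m \<longleftrightarrow> a \<in> Pos \<and> (\<exists>x. (\<forall>b\<in>Pos. 0 \<le> cop x b \<and> cop x b \<le> real p) \<and>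
      cop x a = of_int m * real p \<and> (\<forall>b\<in>Pos. b \<noteq> a \<longrightarrow> 0 < cop x b \<and> cop x b < real p))"

lemma not_mult_p: assumes "0 < c" "c < real p" shows "c \<noteq> of_int k * real p"
proof
  assume c: "c = of_int k * real p"
  have "0 < of_int k * real p" "of_int k * real p < 1 * real p" using assms c by auto
  hence "0 < real_of_int k" "real_of_int k < 1" using ppos
    by (auto simp: zero_less_mult_iff mult_less_cancel_right)
  hence "0 < k" "k < 1" by simp_all
  thus False by simp
qed

lemma A_gen: "y \<in> A \<Longrightarrow> gen y"
  unfolding gen_iff A_def using not_mult_p by blast

lemma A_Sep: assumes "y \<in> A" "z \<in> A" shows "Sep y z = {}"
proof -
  have "H \<notin> Sep y z" for H
  proof
    assume H: "H \<in> Sep y z"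
    have "H \<in> HYP" using H unfolding Sep_def by auto
    then obtain b k where b: "b \<in> Pos" "H = hyp b k" using HYP_Pos by blast
    have bP: "b \<in> Phi" using b PosPhi by auto
    have neg: "(cop y b - of_int k * real p) * (cop z b - of_int k * real p) < 0"
      using H b Sep_hyp_iff[OF bP] by auto
    have i: "0 < cop y b" "cop y b < real p" "0 < cop z b" "cop z b < real p"
      using assms b unfolding A_def by auto
    show False
    proof (cases "k \<le> 0")
      case True
      hence "of_int k * real p \<le> 0" by (simp add: mult_nonpos_nonneg)
      hence "cop y b - of_int k * real p > 0" "cop z b - of_int k * real p > 0" using i by linarith+
      hence "0 < (cop y b - of_int k * real p) * (cop z b - of_int k * real p)" by (rule mult_pos_pos)
      thus False using neg by linarith
    next
      case False
      hence "real_of_int k \<ge> 1" by simp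
      hence "of_int k * real p \<ge> real p" using ppos by simp
      hence "cop y b - of_int k * real p < 0" "cop z b - of_int k * real p < 0" using i by linarith+
      hence "0 < (cop y b - of_int k * real p) * (cop z b - of_int k * real p)" by (rule mult_neg_neg)
      thus False using neg by linarith
    qed
  qed
  thus ?thesis by blast
qed

lemma Sep_empty_A: assumes "y0 \<in> A" "gen z" "Sep y0 z = {}" shows "z \<in> A"
proof (rule ccontr)
  assume "z \<notin> A"
  then obtain b where b: "b \<in> Pos" "\<not> (0 < cop z b \<and> cop z b < real p)" unfolding A_def by auto
  have bP: "b \<in> Phi" using b PosPhi by auto
  have y: "0 < cop y0 b" "cop y0 b < real p" using assms(1) b unfolding A_def by auto
  have g0: "cop z b \<noteq> of_int 0 * real p" and g1: "cop z b \<noteq> of_int 1 * real p"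
    using assms(2) b unfolding gen_iff by blast+
  show False
  proof (cases "cop z b < 0")
    case True
    have "(cop y0 b - of_int 0 * real p) * (cop z b - of_int 0 * real p) < 0"
      using True y by (simp add: mult_pos_neg)
    thus False using Sep_hyp_iff[OF bP] assms(3) by blast
  next
    case False
    hence "cop z b > real p" using b g0 g1 by auto
    hence "(cop y0 b - of_int 1 * real p) * (cop z b - of_int 1 * real p) < 0"
      using y by (simp add: mult_neg_pos)
    thus False using Sep_hyp_iff[OF bP] assms(3) by blast
  qed
qed

lemma wall_m: assumes "wall a m" shows "m = 0 \<or> m = 1"
proof -
  obtain x where x: "\<forall>b\<in>Pos. 0 \<le> cop x b \<and> cop x b \<le> real p" "cop x a = of_int m * real p" and a: "a \<in> Pos"
    using assms unfolding wall_def by blast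
  have "0 \<le> cop x a" "cop x a \<le> real p" using x(1) a by auto
  hence "0 \<le> of_int m * real p" "of_int m * real p \<le> 1 * real p" using x(2) by simp_all
  hence "0 \<le> real_of_int m" "real_of_int m \<le> 1" using ppos
    by (auto simp: zero_le_mult_iff mult_le_cancel_right)
  hence "0 \<le> m" "m \<le> 1" by simp_all
  thus ?thesis by linarith
qed

end

context rs begin

lemma strip_nosep:
  assumes "0 < c1" "c1 < real p" "0 < c2" "c2 < real p"
  shows "\<not> (c1 - of_int k * real p) * (c2 - of_int k * real p) < 0"
proof (cases "k \<le> 0")
  case True
  hence "of_int k * real p \<le> 0" by (simp add: mult_nonpos_nonneg)
  hence "c1 - of_int k * real p > 0" "c2 - of_int k * real p > 0" using assms by linarith+
  hence "0 < (c1 - of_int k * real p) * (c2 - of_int k * real p)" by (rule mult_pos_pos)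
  thus ?thesis by linarith
next
  case False
  hence "real_of_int k \<ge> 1" by simp
  hence "of_int k * real p \<ge> 1 * real p" using ppos by (intro mult_right_mono) auto
  hence "c1 - of_int k * real p < 0" "c2 - of_int k * real p < 0" using assms by linarith+
  hence "0 < (c1 - of_int k * real p) * (c2 - of_int k * real p)" by (rule mult_neg_neg)
  thus ?thesis by linarith
qed

lemma crossing:
  assumes y0: "y0 \<in> A" and w: "wall a m"
  shows "Sep y0 (aff_refl p a m y0) = {hyp a m}"
proof -
  obtain x where x: "\<forall>b\<in>Pos. 0 \<le> cop x b \<and> cop x b \<le> real p" "cop x a = of_int m * real p"
    "\<forall>b\<in>Pos. b \<noteq> a \<longrightarrow> 0 < cop x b \<and> cop x b < real p" and aPos: "a \<in> Pos"
    using w unfolding wall_def by blast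
  have aP: "a \<in> Phi" using aPos PosPhi by auto
  have a0: "a \<noteq> 0" using nonzero aP by blast
  have m01: "m = 0 \<or> m = 1" using wall_m[OF w] .
  let ?r = "aff_refl p a m"
  have rW: "?r \<in> Wp Phi p" using Wp_gen[OF aP] .
  have rx: "?r x = x" using aff_refl_fix_iff[OF a0] x(2) by blast
  have ev1: "\<forall>b\<in>Pos. eventually (\<lambda>t. b \<noteq> a \<longrightarrow>
     0 < cop x b + t * (cop (?r y0) b - cop x b) \<and> cop x b + t * (cop (?r y0) b - cop x b) < real p) (at_right 0)"
  proof
    fix b assume b: "b \<in> Pos"
    show "eventually (\<lambda>t. b \<noteq> a \<longrightarrow>
     0 < cop x b + t * (cop (?r y0) b - cop x b) \<and> cop x b + t * (cop (?r y0) b - cop x b) < real p) (at_right 0)"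
    proof (cases "b = a")
      case True thus ?thesis by simp
    next
      case False
      hence "0 < cop x b" "cop x b < real p" using x(3) b by auto
      from ev_lin[OF this, of "cop (?r y0) b - cop x b"]
      show ?thesis by (rule eventually_mono) simp
    qed
  qed
  have "eventually (\<lambda>t. \<forall>b\<in>Pos. b \<noteq> a \<longrightarrow>
     0 < cop x b + t * (cop (?r y0) b - cop x b) \<and> cop x b + t * (cop (?r y0) b - cop x b) < real p) (at_right 0)"
    by (rule eventually_ball_finite) (use finPhi PosPhi finite_subset ev1 in auto)
  hence "eventually (\<lambda>t. t > 0 \<and> (t < 1 \<and> (\<forall>b\<in>Pos. b \<noteq> a \<longrightarrow>
     0 < cop x b + t * (cop (?r y0) b - cop x b) \<and> cop x b + t * (cop (?r y0) b - cop x b) < real p))) (at_right 0)"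
    by (intro eventually_conj ev_pos ev_lt1)
  from ev_pick[OF this] obtain t where t: "t > 0" "t < 1"
    "\<forall>b\<in>Pos. b \<noteq> a \<longrightarrow> 0 < cop x b + t * (cop (?r y0) b - cop x b) \<and> cop x b + t * (cop (?r y0) b - cop x b) < real p"
    by blast
  define u where "u = (1 - t) *\<^sub>R x + t *\<^sub>R y0"
  have ru: "?r u = (1 - t) *\<^sub>R x + t *\<^sub>R ?r y0" unfolding u_def aff_refl_affine rx ..
  have copu: "cop u b = cop x b + t * (cop y0 b - cop x b)" for b
    unfolding u_def cop_comb by (simp add: algebra_simps)
  have copru: "cop (?r u) b = cop x b + t * (cop (?r y0) b - cop x b)" for b
    unfolding ru cop_comb by (simp add: algebra_simps)
  have uA: "u \<in> A" unfolding A_def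
  proof (intro CollectI ballI conjI)
    fix b assume b: "b \<in> Pos"
    have cx: "0 \<le> cop x b" "cop x b \<le> real p" using x(1) b by auto
    have cy: "0 < cop y0 b" "cop y0 b < real p" using y0 b unfolding A_def by auto
    have e: "cop u b = (1 - t) * cop x b + t * cop y0 b" unfolding copu by (simp add: algebra_simps)
    have "(1 - t) * cop x b \<ge> 0" using cx t by simp
    moreover have "t * cop y0 b > 0" using cy t by simp
    ultimately show "0 < cop u b" unfolding e by linarith
    have "(1 - t) * cop x b \<le> (1 - t) * real p" using cx t by (intro mult_left_mono) auto
    moreover have "t * cop y0 b < t * real p" using cy t by (intro mult_strict_left_mono) auto
    ultimately show "cop u b < real p" unfolding e by (simp add: algebra_simps)
  qed
  have gy0: "gen y0" using A_gen[OF y0] .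
  have gu: "gen u" using A_gen[OF uA] .
  have gru: "gen (?r u)" using Wp_gen_pt[OF rW gu] .
  have gry0: "gen (?r y0)" using Wp_gen_pt[OF rW gy0] .
  have S1: "Sep y0 u = {}" using A_Sep[OF y0 uA] .
  have S3: "Sep (?r u) (?r y0) = {}" using Wp_Sep[OF rW, of u y0] A_Sep[OF uA y0] by simp
  have cy0a: "0 < cop y0 a" "cop y0 a < real p" using y0 aPos unfolding A_def by auto
  have ne: "cop y0 a \<noteq> of_int m * real p" using gy0 aPos unfolding gen_iff by blast
  define e where "e = cop y0 a - of_int m * real p"
  define d where "d = t * e"
  have e_bd: "- real p < e" "e < real p" "e \<noteq> 0" using m01 cy0a ne unfolding e_def by auto
  have d_bd0: "- real p < d \<and> d < real p"
  proof (cases "e \<ge> 0")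
    case True
    have "t * e \<le> 1 * e" using t True by (intro mult_right_mono) auto
    moreover have "t * e \<ge> 0" using t True by simp
    ultimately show ?thesis unfolding d_def using e_bd by auto
  next
    case False
    have "1 * e \<le> t * e" using t False by (intro mult_right_mono_neg) auto
    moreover have "t * e \<le> 0" using t False by (simp add: mult_nonneg_nonpos)
    ultimately show ?thesis unfolding d_def using e_bd by auto
  qed
  have "d \<noteq> 0" unfolding d_def using t e_bd by simp
  hence d_bd: "- real p < d" "d < real p" "d \<noteq> 0" using d_bd0 by auto
  have cua: "cop u a = of_int m * real p + d" unfolding copu x(2) d_def e_def by (simp add: algebra_simps)
  have crua: "cop (?r u) a = of_int m * real p - d"
    using cop_aff_refl_self[OF a0, of p m u] cua by simp
  have S2: "Sep u (?r u) = {hyp a m}"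
  proof
    show "Sep u (?r u) \<subseteq> {hyp a m}"
    proof
      fix H assume H: "H \<in> Sep u (?r u)"
      have "H \<in> HYP" using H unfolding Sep_def by auto
      then obtain b k where b: "b \<in> Pos" "H = hyp b k" using HYP_Pos by blast
      have bP: "b \<in> Phi" using b PosPhi by auto
      have neg: "(cop u b - of_int k * real p) * (cop (?r u) b - of_int k * real p) < 0"
        using H b Sep_hyp_iff[OF bP] by auto
      have "b = a"
      proof (rule ccontr)
        assume "b \<noteq> a"
        hence "0 < cop (?r u) b" "cop (?r u) b < real p" using t(3) b unfolding copru by auto
        moreover have "0 < cop u b" "cop u b < real p" using uA b unfolding A_def by auto
        ultimately show False using strip_nosep neg by blast
      qed
      have "k = m"
      proof (rule ccontr)
        assume km: "k \<noteq> m"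
        show False
        proof (cases "k < m")
          case True
          hence "real_of_int m - real_of_int k \<ge> 1" by linarith
          hence "(real_of_int m - real_of_int k) * real p \<ge> 1 * real p" by (intro mult_right_mono) auto
          hence "cop u b - of_int k * real p > 0" "cop (?r u) b - of_int k * real p > 0"
            using \<open>b = a\<close> cua crua d_bd by (simp_all add: algebra_simps)
          hence "0 < (cop u b - of_int k * real p) * (cop (?r u) b - of_int k * real p)" by (rule mult_pos_pos)
          thus False using neg by linarith
        next
          case False
          hence "real_of_int k - real_of_int m \<ge> 1" using km by linarith
          hence "(real_of_int k - real_of_int m) * real p \<ge> 1 * real p" by (intro mult_right_mono) auto
          hence "cop u b - of_int k * real p < 0" "cop (?r u) b - of_int k * real p < 0"
            using \<open>b = a\<close> cua crua d_bd by (simp_all add: algebra_simps)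
          hence "0 < (cop u b - of_int k * real p) * (cop (?r u) b - of_int k * real p)" by (rule mult_neg_neg)
          thus False using neg by linarith
        qed
      qed
      thus "H \<in> {hyp a m}" using b \<open>b = a\<close> by simp
    qed
  next
    have "(cop u a - of_int m * real p) * (cop (?r u) a - of_int m * real p) = - (d * d)"
      using cua crua by simp
    moreover have "d * d > 0" using d_bd(3) by (auto simp: zero_less_mult_iff linorder_neq_iff)
    ultimately have "hyp a m \<in> Sep u (?r u)" using Sep_hyp_iff[OF aP] by simp
    thus "{hyp a m} \<subseteq> Sep u (?r u)" by simp
  qed
  have "H \<in> Sep y0 (?r y0) \<longleftrightarrow> H \<in> Sep u (?r u)" for H
  proof -
    have "H \<in> Sep y0 (?r y0) \<longleftrightarrow> (H \<in> Sep y0 u \<longleftrightarrow> H \<notin> Sep u (?r y0))"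
      by (rule Sep_trans[OF gy0 gu gry0])
    also have "\<dots> \<longleftrightarrow> H \<in> Sep u (?r y0)" using S1 by simp
    also have "\<dots> \<longleftrightarrow> (H \<in> Sep u (?r u) \<longleftrightarrow> H \<notin> Sep (?r u) (?r y0))"
      by (rule Sep_trans[OF gu gru gry0])
    also have "\<dots> \<longleftrightarrow> H \<in> Sep u (?r u)" using S3 by simp
    finally show ?thesis .
  qed
  thus ?thesis using S2 by blast
qed

end

context rs begin

definition fl :: "'a \<times> int \<Rightarrow> 'a \<Rightarrow> real" where
  "fl l y = (if snd l = 0 then cop y (fst l) else real p - cop y (fst l))"
definition cl :: "'a \<times> int \<Rightarrow> 'a" where
  "cl l = ((if snd l = 0 then 1 else -1) * (2 / (fst l \<bullet> fst l))) *\<^sub>R fst l"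
definition el :: "'a \<times> int \<Rightarrow> real" where
  "el l = (if snd l = 0 then 0 else real p)"
definition FF :: "('a \<times> int) set" where
  "FF = Pos \<times> {0, 1}"

lemma fl_lin: "fl l y = cl l \<bullet> y + el l"
  unfolding fl_def cl_def el_def cop_def by (simp add: inner_commute)

lemma fl_add: "fl l (y + t *\<^sub>R v) = fl l y + t * (cl l \<bullet> v)"
  unfolding fl_lin by (simp add: inner_add_right algebra_simps)

lemma fl_diff: "cl l \<bullet> (y - z) = fl l y - fl l z"
  unfolding fl_lin by (simp add: inner_diff_right)

lemma finFF: "finite FF"
  unfolding FF_def using finPhi PosPhi finite_subset by blast

lemma nonpar:
  assumes l: "l \<in> FF" and l': "l' \<in> FF" and ne: "l \<noteq> l'" and \<alpha>: "\<alpha> > 0" and \<alpha>': "\<alpha>' > 0"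
  shows "\<alpha> *\<^sub>R cl l' - \<alpha>' *\<^sub>R cl l \<noteq> 0"
proof
  assume eq0: "\<alpha> *\<^sub>R cl l' - \<alpha>' *\<^sub>R cl l = 0"
  obtain b m where lb: "l = (b, m)" by (cases l)
  obtain b' m' where lb': "l' = (b', m')" by (cases l')
  have b: "b \<in> Pos" "m = 0 \<or> m = 1" using l lb unfolding FF_def by auto
  have b': "b' \<in> Pos" "m' = 0 \<or> m' = 1" using l' lb' unfolding FF_def by auto
  have bP: "b \<in> Phi" "b' \<in> Phi" using b b' PosPhi by auto
  have b0: "b \<noteq> 0" "b' \<noteq> 0" using bP nonzero by auto
  define s where "s = (if m = 0 then 1 else -1 :: real)"
  define s' where "s' = (if m' = 0 then 1 else -1 :: real)"
  define c where "c = 2 / (b \<bullet> b)"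
  define c' where "c' = 2 / (b' \<bullet> b')"
  have cpos: "c > 0" "c' > 0" unfolding c_def c'_def using b0 by auto
  have ss: "s = 1 \<or> s = -1" "s' = 1 \<or> s' = -1" unfolding s_def s'_def by auto
  have "(\<alpha> * (s' * c')) *\<^sub>R b' = (\<alpha>' * (s * c)) *\<^sub>R b"
    using eq0 unfolding cl_def lb lb' s_def s'_def c_def c'_def by simp
  moreover have nz: "\<alpha> * (s' * c') \<noteq> 0" using \<alpha> cpos ss by auto
  ultimately have bb: "b' = ((\<alpha>' * (s * c)) / (\<alpha> * (s' * c'))) *\<^sub>R b"
  proof -
    assume eq: "(\<alpha> * (s' * c')) *\<^sub>R b' = (\<alpha>' * (s * c)) *\<^sub>R b" and nz: "\<alpha> * (s' * c') \<noteq> 0"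
    have "b' = inverse (\<alpha> * (s' * c')) *\<^sub>R ((\<alpha> * (s' * c')) *\<^sub>R b')"
      by (simp only: scaleR_scaleR left_inverse[OF nz] scaleR_one)
    also have "\<dots> = inverse (\<alpha> * (s' * c')) *\<^sub>R ((\<alpha>' * (s * c)) *\<^sub>R b)" using eq by simp
    also have "\<dots> = ((\<alpha>' * (s * c)) / (\<alpha> * (s' * c'))) *\<^sub>R b" by (simp add: divide_inverse mult.commute)
    finally show ?thesis .
  qed
  define \<kappa> where "\<kappa> = (\<alpha>' * (s * c)) / (\<alpha> * (s' * c'))"
  have bk: "b' = \<kappa> *\<^sub>R b" using bb unfolding \<kappa>_def .
  have k1: "\<kappa> = 1 \<or> \<kappa> = -1" using reduced[OF bP(1)] bk bP(2) by simp
  show False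
  proof (cases "s = s'")
    case True
    have "\<kappa> > 0" unfolding \<kappa>_def using True ss \<alpha> \<alpha>' cpos by (auto simp: divide_pos_pos)
    hence "\<kappa> = 1" using k1 by auto
    hence "b' = b" using bk by simp
    moreover have "m = m'" using True b(2) b'(2) unfolding s_def s'_def by auto
    ultimately show False using ne lb lb' by simp
  next
    case False
    hence "s * s' = -1" using ss by auto
    hence "\<kappa> < 0" unfolding \<kappa>_def using ss \<alpha> \<alpha>' cpos False
      by (auto simp: divide_pos_neg divide_neg_pos mult_pos_neg mult_neg_pos)
    hence "\<kappa> = -1" using k1 by auto
    hence "b' = - b" using bk by simp
    thus False using b(1) b'(1) Pos_neg_not by blast
  qed
qed


lemma FF_y0: assumes y0: "y0 \<in> A" and l: "l \<in> FF" shows "0 < fl l y0"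
proof -
  obtain b m where lb: "l = (b, m)" "b \<in> Pos" "m = 0 \<or> m = 1" using l unfolding FF_def by auto
  have "0 < cop y0 b" "cop y0 b < real p" using y0 lb unfolding A_def by auto
  thus ?thesis unfolding fl_def lb(1) using lb(3) by auto
qed

lemma FF_gen: assumes g: "gen z" and l: "l \<in> FF" shows "fl l z \<noteq> 0"
proof -
  obtain b m where lb: "l = (b, m)" "b \<in> Pos" "m = 0 \<or> m = 1" using l unfolding FF_def by auto
  have "cop z b \<noteq> of_int 0 * real p" "cop z b \<noteq> of_int 1 * real p" using g lb(2) unfolding gen_iff by blast+
  thus ?thesis unfolding fl_def lb(1) using lb(3) by auto
qed

lemma exists_wall:
  assumes y0: "y0 \<in> A" and gz: "gen z" and zA: "z \<notin> A"
  shows "\<exists>a m. wall a m \<and> hyp a m \<in> Sep y0 z"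
proof -
  have Fpos: "\<And>l. l \<in> FF \<Longrightarrow> 0 < fl l y0" using FF_y0[OF y0] .
  have Fz: "\<And>l. l \<in> FF \<Longrightarrow> fl l z \<noteq> 0" using FF_gen[OF gz] .
  obtain l0 where l0: "l0 \<in> FF" "fl l0 z < 0"
  proof -
    obtain b where b: "b \<in> Pos" "\<not> (0 < cop z b \<and> cop z b < real p)" using zA unfolding A_def by auto
    have "(b, 0) \<in> FF" "(b, 1) \<in> FF" using b unfolding FF_def by auto
    hence "fl (b, 0) z \<noteq> 0" "fl (b, 1) z \<noteq> 0" using Fz by blast+
    hence "fl (b, 0) z < 0 \<or> fl (b, 1) z < 0" using b(2) unfolding fl_def by auto
    thus ?thesis using that \<open>(b, 0) \<in> FF\<close> \<open>(b, 1) \<in> FF\<close> by blast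
  qed
  define PP where "PP = {q. fst q \<in> FF \<and> snd q \<in> FF \<and> fst q \<noteq> snd q}"
  have finPP: "finite PP"
    by (rule finite_subset[of _ "FF \<times> FF"]) (auto simp: PP_def finFF)
  define dv where "dv q = fl (fst q) y0 *\<^sub>R cl (snd q) - fl (snd q) y0 *\<^sub>R cl (fst q)" for q
  have "finite (dv ` PP)" using finPP by simp
  moreover have "0 \<notin> dv ` PP"
  proof
    assume "0 \<in> dv ` PP"
    then obtain q where q: "q \<in> PP" "dv q = 0" by (metis imageE)
    have "dv q \<noteq> 0" unfolding dv_def
      by (rule nonpar) (use q(1) Fpos in \<open>auto simp: PP_def\<close>)
    thus False using q(2) by simp
  qed
  ultimately obtain v where v: "\<forall>d\<in>dv ` PP. v \<bullet> d \<noteq> 0" using avoid_vec by blast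
  have E1: "\<forall>l\<in>FF. eventually (\<lambda>t. (fl l z < 0 \<longrightarrow> fl l (z + t *\<^sub>R v) < 0) \<and>
                                     (fl l z > 0 \<longrightarrow> fl l (z + t *\<^sub>R v) > 0)) (at_right 0)"
  proof
    fix l assume l: "l \<in> FF"
    show "eventually (\<lambda>t. (fl l z < 0 \<longrightarrow> fl l (z + t *\<^sub>R v) < 0) \<and>
                                     (fl l z > 0 \<longrightarrow> fl l (z + t *\<^sub>R v) > 0)) (at_right 0)"
    proof (cases "fl l z < 0")
      case True
      have "eventually (\<lambda>t. fl l z - 1 < fl l z + t * (cl l \<bullet> v) \<and> fl l z + t * (cl l \<bullet> v) < 0) (at_right 0)"
        by (rule ev_lin) (use True in auto)
      thus ?thesis by (rule eventually_mono) (use True in \<open>auto simp: fl_add\<close>)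
    next
      case False
      hence F: "fl l z > 0" using Fz[OF l] by auto
      have "eventually (\<lambda>t. 0 < fl l z + t * (cl l \<bullet> v) \<and> fl l z + t * (cl l \<bullet> v) < fl l z + 1) (at_right 0)"
        by (rule ev_lin) (use F in auto)
      thus ?thesis by (rule eventually_mono) (use F in \<open>auto simp: fl_add\<close>)
    qed
  qed
  have E2: "\<forall>q\<in>PP. eventually (\<lambda>t. fl (fst q) y0 * fl (snd q) (z + t *\<^sub>R v) - fl (snd q) y0 * fl (fst q) (z + t *\<^sub>R v) \<noteq> 0) (at_right 0)"
  proof
    fix q assume q: "q \<in> PP"
    have ne: "v \<bullet> dv q \<noteq> 0" using v q by blast
    have e: "fl (fst q) y0 * fl (snd q) (z + t *\<^sub>R v) - fl (snd q) y0 * fl (fst q) (z + t *\<^sub>R v) =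
          (fl (fst q) y0 * fl (snd q) z - fl (snd q) y0 * fl (fst q) z) + t * (v \<bullet> dv q)" for t
      unfolding fl_add dv_def by (simp add: inner_diff_right inner_commute algebra_simps)
    have "eventually (\<lambda>t. (fl (fst q) y0 * fl (snd q) z - fl (snd q) y0 * fl (fst q) z) + t * (v \<bullet> dv q) \<noteq> 0) (at_right 0)"
      by (rule ev_ne) (use ne in simp)
    thus "eventually (\<lambda>t. fl (fst q) y0 * fl (snd q) (z + t *\<^sub>R v) - fl (snd q) y0 * fl (fst q) (z + t *\<^sub>R v) \<noteq> 0) (at_right 0)"
      unfolding e .
  qed
  have "eventually (\<lambda>t. (\<forall>l\<in>FF. (fl l z < 0 \<longrightarrow> fl l (z + t *\<^sub>R v) < 0) \<and> (fl l z > 0 \<longrightarrow> fl l (z + t *\<^sub>R v) > 0)) \<and>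
      (\<forall>q\<in>PP. fl (fst q) y0 * fl (snd q) (z + t *\<^sub>R v) - fl (snd q) y0 * fl (fst q) (z + t *\<^sub>R v) \<noteq> 0)) (at_right 0)"
    by (intro eventually_conj eventually_ball_finite[OF finFF E1] eventually_ball_finite[OF finPP E2])
  from ev_pick[OF this] obtain t where t:
    "\<forall>l\<in>FF. (fl l z < 0 \<longrightarrow> fl l (z + t *\<^sub>R v) < 0) \<and> (fl l z > 0 \<longrightarrow> fl l (z + t *\<^sub>R v) > 0)"
    "\<forall>q\<in>PP. fl (fst q) y0 * fl (snd q) (z + t *\<^sub>R v) - fl (snd q) y0 * fl (fst q) (z + t *\<^sub>R v) \<noteq> 0"
    by blast
  define z' where "z' = z + t *\<^sub>R v"
  have sgn: "\<And>l. l \<in> FF \<Longrightarrow> fl l z' < 0 \<longleftrightarrow> fl l z < 0"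
  proof -
    fix l assume l: "l \<in> FF"
    show "fl l z' < 0 \<longleftrightarrow> fl l z < 0"
      using t(1) l Fz[OF l] unfolding z'_def by (meson linorder_neqE_linordered_idom not_less_iff_gr_or_eq)
  qed
  have tie: "\<And>l l'. l \<in> FF \<Longrightarrow> l' \<in> FF \<Longrightarrow> l \<noteq> l' \<Longrightarrow> fl l y0 * fl l' z' \<noteq> fl l' y0 * fl l z'"
  proof -
    fix l l' assume "l \<in> FF" "l' \<in> FF" "l \<noteq> l'"
    hence "(l, l') \<in> PP" unfolding PP_def by simp
    thus "fl l y0 * fl l' z' \<noteq> fl l' y0 * fl l z'" using t(2) unfolding z'_def by fastforce
  qed
  define V where "V = {l \<in> FF. fl l z' < 0}"
  have finV: "finite V" unfolding V_def using finFF by simp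
  have l0V: "l0 \<in> V" unfolding V_def using l0 sgn by blast
  define \<tau> where "\<tau> l = fl l y0 / (fl l y0 - fl l z')" for l
  define \<mu> where "\<mu> = Min (\<tau> ` V)"
  have "\<mu> \<in> \<tau> ` V" unfolding \<mu>_def using finV l0V by (intro Min_in) auto
  then obtain i where iV: "i \<in> V" and \<tau>i: "\<tau> i = \<mu>" by blast
  have \<tau>min: "\<And>l. l \<in> V \<Longrightarrow> \<tau> i \<le> \<tau> l" unfolding \<tau>i \<mu>_def using finV by simp
  have iF: "i \<in> FF" and Bi: "fl i z' < 0" using iV unfolding V_def by auto
  have Ai: "0 < fl i y0" using Fpos[OF iF] .
  have den: "\<And>l. l \<in> V \<Longrightarrow> 0 < fl l y0 - fl l z'"
    using Fpos unfolding V_def by fastforce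
  have \<tau>strict: "\<And>l. l \<in> V \<Longrightarrow> l \<noteq> i \<Longrightarrow> \<tau> i < \<tau> l"
  proof -
    fix l assume lV: "l \<in> V" and li: "l \<noteq> i"
    have lF: "l \<in> FF" using lV unfolding V_def by auto
    have "\<tau> i \<noteq> \<tau> l"
    proof
      assume eq: "\<tau> i = \<tau> l"
      have d1: "fl i y0 - fl i z' \<noteq> 0" "fl l y0 - fl l z' \<noteq> 0" using den[OF iV] den[OF lV] by linarith+
      have "fl i y0 * (fl l y0 - fl l z') = fl l y0 * (fl i y0 - fl i z')"
        using eq d1 unfolding \<tau>_def by (simp add: field_simps)
      hence "fl i y0 * fl l z' = fl l y0 * fl i z'" by (simp add: algebra_simps)
      thus False using tie[OF iF lF li[symmetric]] by simp
    qed
    thus "\<tau> i < \<tau> l" using \<tau>min[OF lV] by simp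
  qed
  have \<tau>i_bd: "0 < \<tau> i" "\<tau> i < 1"
    using Ai Bi unfolding \<tau>_def by (auto simp: divide_simps)
  define x where "x = y0 + \<tau> i *\<^sub>R (z' - y0)"
  have flx: "\<And>l. fl l x = fl l y0 + \<tau> i * (fl l z' - fl l y0)"
    unfolding x_def fl_add fl_diff ..
  have fix0: "fl i x = 0"
    unfolding flx \<tau>_def using Ai Bi by (simp add: field_simps)
  have fixpos: "\<And>l. l \<in> FF \<Longrightarrow> l \<noteq> i \<Longrightarrow> 0 < fl l x"
  proof -
    fix l assume lF: "l \<in> FF" and li: "l \<noteq> i"
    have Al: "0 < fl l y0" using Fpos[OF lF] .
    show "0 < fl l x"
    proof (cases "l \<in> V")
      case True
      have dl: "0 < fl l y0 - fl l z'" using den[OF True] .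
      have "\<tau> i * (fl l y0 - fl l z') < \<tau> l * (fl l y0 - fl l z')"
        using \<tau>strict[OF True li] dl by (intro mult_strict_right_mono)
      also have "\<tau> l * (fl l y0 - fl l z') = fl l y0" unfolding \<tau>_def using dl by simp
      finally show ?thesis unfolding flx by (simp add: algebra_simps)
    next
      case False
      hence Bl: "0 \<le> fl l z'" unfolding V_def using lF by auto
      have "fl l x = (1 - \<tau> i) * fl l y0 + \<tau> i * fl l z'" unfolding flx by (simp add: algebra_simps)
      moreover have "(1 - \<tau> i) * fl l y0 > 0" using \<tau>i_bd Al by simp
      moreover have "\<tau> i * fl l z' \<ge> 0" using \<tau>i_bd Bl by simp
      ultimately show ?thesis by linarith
    qed
  qed
  obtain a m where im: "i = (a, m)" by (cases i)
  have aPos: "a \<in> Pos" and m01: "m = 0 \<or> m = 1" using iF unfolding im FF_def by auto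
  have aP: "a \<in> Phi" using aPos PosPhi by auto
  have nonneg: "\<And>l. l \<in> FF \<Longrightarrow> 0 \<le> fl l x" using fixpos fix0 by (metis less_eq_real_def)
  have "wall a m" unfolding wall_def
  proof (intro conjI exI[of _ x])
    show "a \<in> Pos" by fact
    show "\<forall>b\<in>Pos. 0 \<le> cop x b \<and> cop x b \<le> real p"
    proof
      fix b assume b: "b \<in> Pos"
      have "(b, 0) \<in> FF" "(b, 1) \<in> FF" using b unfolding FF_def by auto
      from nonneg[OF this(1)] nonneg[OF this(2)]
      show "0 \<le> cop x b \<and> cop x b \<le> real p" unfolding fl_def by simp
    qed
    show "cop x a = of_int m * real p" using fix0 m01 unfolding im fl_def by auto
    show "\<forall>b\<in>Pos. b \<noteq> a \<longrightarrow> 0 < cop x b \<and> cop x b < real p"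
    proof (intro ballI impI)
      fix b assume b: "b \<in> Pos" "b \<noteq> a"
      have "(b, 0) \<in> FF" "(b, 1) \<in> FF" using b unfolding FF_def by auto
      moreover have "(b, 0) \<noteq> i" "(b, 1) \<noteq> i" using b(2) unfolding im by auto
      ultimately have "0 < fl (b, 0) x" "0 < fl (b, 1) x" using fixpos by blast+
      thus "0 < cop x b \<and> cop x b < real p" unfolding fl_def by simp
    qed
  qed
  moreover have "hyp a m \<in> Sep y0 z"
  proof -
    have Biz: "fl i z < 0" using sgn[OF iF] Bi by simp
    have "(cop y0 a - of_int m * real p) * (cop z a - of_int m * real p) < 0"
    proof (cases "m = 0")
      case True
      hence "0 < cop y0 a" "cop z a < 0" using Ai Biz unfolding im fl_def by auto
      thus ?thesis using True by (simp add: mult_pos_neg)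
    next
      case False
      hence m1: "m = 1" using m01 by simp
      hence "cop y0 a < real p" "cop z a > real p" using Ai Biz unfolding im fl_def by auto
      thus ?thesis using m1 by (simp add: mult_neg_pos)
    qed
    thus ?thesis using Sep_hyp_iff[OF aP] by simp
  qed
  ultimately show ?thesis by blast
qed
end

lemma gen_group_inv:
  assumes inv: "\<And>s. s \<in> S \<Longrightarrow> s \<circ> s = id"
  shows "u \<in> gen_group S \<Longrightarrow> \<exists>u'\<in>gen_group S. u \<circ> u' = id \<and> u' \<circ> u = id"
proof (induction u rule: gen_group.induct)
  case gen_id show ?case by (rule bexI[of _ id]) (simp_all add: gen_group.gen_id)
next
  case (gen_step s w)
  then obtain w' where w': "w' \<in> gen_group S" "w \<circ> w' = id" "w' \<circ> w = id" by blast
  have r: "s \<circ> s = id" using inv gen_step(1) by blast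
  have "w' \<circ> s \<in> gen_group S" using gen_group_comp gen_group_gen w'(1) gen_step(1) by blast
  moreover have "(s \<circ> w) \<circ> (w' \<circ> s) = id" by (metis comp_assoc id_comp r w'(2))
  moreover have "(w' \<circ> s) \<circ> (s \<circ> w) = id" by (metis comp_assoc id_comp r w'(3))
  ultimately show ?case by blast
qed

lemma finK: assumes "(p::nat) > 0" shows "finite {k::int. \<bar>of_int k * real p - c\<bar> < real p}"
proof -
  define N where "N = ceiling ((\<bar>c\<bar> + real p) / real p)"
  have "{k::int. \<bar>of_int k * real p - c\<bar> < real p} \<subseteq> {- N .. N}"
  proof
    fix k assume "k \<in> {k::int. \<bar>of_int k * real p - c\<bar> < real p}"
    hence "\<bar>of_int k * real p - c\<bar> < real p" by simp
    hence "\<bar>of_int k * real p\<bar> \<le> \<bar>c\<bar> + real p" by arith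
    hence "\<bar>real_of_int k\<bar> * real p \<le> \<bar>c\<bar> + real p" by (simp only: abs_mult abs_of_nat)
    hence "real_of_int \<bar>k\<bar> \<le> (\<bar>c\<bar> + real p) / real p"
      using assms by (simp only: pos_le_divide_eq of_nat_0_less_iff of_int_abs)
    hence "ceiling (real_of_int \<bar>k\<bar>) \<le> N" unfolding N_def by (rule ceiling_mono)
    hence "\<bar>k\<bar> \<le> N" by (simp only: ceiling_of_int)
    thus "k \<in> {- N .. N}" by arith
  qed
  thus ?thesis by (rule finite_subset) simp
qed

lemma NM: assumes p: "(p::nat) > 0" and d: "d \<noteq> 0"
  shows "eventually (\<lambda>s. \<forall>k::int. c + s * d \<noteq> of_int k * real p) (at_right 0)"
proof -
  define K where "K = {k::int. \<bar>of_int k * real p - c\<bar> < real p}"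
  have fK: "finite K" unfolding K_def using finK[OF p] .
  have "\<forall>k\<in>K. eventually (\<lambda>s. (c - of_int k * real p) + s * d \<noteq> 0) (at_right 0)"
  proof
    fix k assume "k \<in> K" show "eventually (\<lambda>s. (c - of_int k * real p) + s * d \<noteq> 0) (at_right 0)"
      by (rule ev_ne) (use d in simp)
  qed
  hence e1: "eventually (\<lambda>s. \<forall>k\<in>K. (c - of_int k * real p) + s * d \<noteq> 0) (at_right 0)"
    by (rule eventually_ball_finite[OF fK])
  have e2: "eventually (\<lambda>s. - real p < 0 + s * d \<and> 0 + s * d < real p) (at_right 0)"
    by (rule ev_lin) (use p in auto)
  show ?thesis using eventually_conj[OF e1 e2]
  proof (rule eventually_mono)
    fix s assume h: "(\<forall>k\<in>K. (c - of_int k * real p) + s * d \<noteq> 0) \<and> (- real p < 0 + s * d \<and> 0 + s * d < real p)"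
    show "\<forall>k::int. c + s * d \<noteq> of_int k * real p"
    proof (intro allI notI)
      fix k assume eq: "c + s * d = of_int k * real p"
      show False
      proof (cases "k \<in> K")
        case True thus False using h eq by auto
      next
        case False
        hence "\<bar>of_int k * real p - c\<bar> \<ge> real p" unfolding K_def by simp
        thus False using h eq by auto
      qed
    qed
  qed
qed

lemma NM2: assumes p: "(p::nat) > 0" and c: "\<forall>k::int. c \<noteq> of_int k * real p"
  shows "eventually (\<lambda>s. \<forall>k::int. (c + s * e - of_int k * real p) * (c - s * e - of_int k * real p) > 0) (at_right 0)"
proof -
  define K where "K = {k::int. \<bar>of_int k * real p - c\<bar> < real p}"
  have fK: "finite K" unfolding K_def using finK[OF p] .
  have "\<forall>k\<in>K. eventually (\<lambda>s. (c + s * e - of_int k * real p) * (c - s * e - of_int k * real p) > 0) (at_right 0)"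
  proof
    fix k assume "k \<in> K"
    define g where "g = c - of_int k * real p"
    have g0: "g \<noteq> 0" unfolding g_def using c by auto
    have eq: "(c + s * e - of_int k * real p) * (c - s * e - of_int k * real p) = (g + s * e) * (g + s * (- e))" for s
      unfolding g_def by (simp add: algebra_simps)
    show "eventually (\<lambda>s. (c + s * e - of_int k * real p) * (c - s * e - of_int k * real p) > 0) (at_right 0)"
      unfolding eq
    proof (cases "g > 0")
      case True
      have "eventually (\<lambda>s. (0 < g + s * e \<and> g + s * e < g + 1) \<and> (0 < g + s * (- e) \<and> g + s * (- e) < g + 1)) (at_right 0)"
        by (intro eventually_conj ev_lin) (use True in auto)
      thus "eventually (\<lambda>s. (g + s * e) * (g + s * (- e)) > 0) (at_right 0)"
        by (rule eventually_mono) (auto intro: mult_pos_pos)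
    next
      case False
      hence gn: "g < 0" using g0 by simp
      have "eventually (\<lambda>s. (g - 1 < g + s * e \<and> g + s * e < 0) \<and> (g - 1 < g + s * (- e) \<and> g + s * (- e) < 0)) (at_right 0)"
        by (intro eventually_conj ev_lin) (use gn in auto)
      thus "eventually (\<lambda>s. (g + s * e) * (g + s * (- e)) > 0) (at_right 0)"
        by (rule eventually_mono) (auto intro: mult_neg_neg)
    qed
  qed
  hence e1: "eventually (\<lambda>s. \<forall>k\<in>K. (c + s * e - of_int k * real p) * (c - s * e - of_int k * real p) > 0) (at_right 0)"
    by (rule eventually_ball_finite[OF fK])
  have e2: "eventually (\<lambda>s. - real p < 0 + s * e \<and> 0 + s * e < real p) (at_right 0)"
    by (rule ev_lin) (use p in auto)
  show ?thesis using eventually_conj[OF e1 e2]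
  proof (rule eventually_mono)
    fix s assume h: "(\<forall>k\<in>K. (c + s * e - of_int k * real p) * (c - s * e - of_int k * real p) > 0) \<and>
       (- real p < 0 + s * e \<and> 0 + s * e < real p)"
    show "\<forall>k::int. (c + s * e - of_int k * real p) * (c - s * e - of_int k * real p) > 0"
    proof
      fix k
      show "(c + s * e - of_int k * real p) * (c - s * e - of_int k * real p) > 0"
      proof (cases "k \<in> K")
        case True thus ?thesis using h by blast
      next
        case False
        hence ab: "\<bar>of_int k * real p - c\<bar> \<ge> real p" unfolding K_def by simp
        show ?thesis
        proof (cases "c - of_int k * real p > 0")
          case True
          hence "c + s * e - of_int k * real p > 0" "c - s * e - of_int k * real p > 0" using ab h by auto
          thus ?thesis by (rule mult_pos_pos)
        next
          case False
          hence "c + s * e - of_int k * real p < 0" "c - s * e - of_int k * real p < 0" using ab h by auto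
          thus ?thesis by (rule mult_neg_neg)
        qed
      qed
    qed
  qed
qed


context rs begin

definition Gs :: "('a \<Rightarrow> 'a) set" where
  "Gs = gen_group {aff_refl p a m | a m. wall a m}"

lemma wall_Phi: "wall a m \<Longrightarrow> a \<in> Phi" unfolding wall_def using PosPhi by auto

lemma Gs_Wp: "u \<in> Gs \<Longrightarrow> u \<in> Wp Phi p"
  unfolding Gs_def Wp_def by (erule gen_group_mono) (auto dest: wall_Phi)

lemma Gs_gen: "wall a m \<Longrightarrow> aff_refl p a m \<in> Gs"
  unfolding Gs_def by (rule gen_group_gen) blast

lemma Gs_comp: "u \<in> Gs \<Longrightarrow> v \<in> Gs \<Longrightarrow> u \<circ> v \<in> Gs"
  unfolding Gs_def by (rule gen_group_comp)

lemma Gs_inv: "u \<in> Gs \<Longrightarrow> \<exists>u'\<in>Gs. u \<circ> u' = id \<and> u' \<circ> u = id"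
  unfolding Gs_def
proof (rule gen_group_inv)
  fix s assume "s \<in> {aff_refl p a m | a m. wall a m}"
  then obtain a m where "s = aff_refl p a m" "wall a m" by blast
  thus "s \<circ> s = id" using aff_refl_comp nonzero wall_Phi by blast
qed

lemma Sep_drop_wall:
  assumes y0: "y0 \<in> A" and w: "wall a m" and gz: "gen z" and H: "hyp a m \<in> Sep y0 z"
  shows "Sep (aff_refl p a m y0) z = Sep y0 z - {hyp a m}"
proof -
  let ?s = "aff_refl p a m"
  have sW: "?s \<in> Wp Phi p" using Wp_gen wall_Phi[OF w] by blast
  have gy0: "gen y0" using A_gen[OF y0] .
  have gs: "gen (?s y0)" using Wp_gen_pt[OF sW gy0] .
  have c: "Sep (?s y0) y0 = {hyp a m}" using crossing[OF y0 w] Sep_sym by metis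
  have "X \<in> Sep (?s y0) z \<longleftrightarrow> (X \<in> Sep (?s y0) y0 \<longleftrightarrow> X \<notin> Sep y0 z)" for X
    by (rule Sep_trans[OF gs gy0 gz])
  thus ?thesis using c H by auto
qed

lemma lemmaT:
  assumes y0: "y0 \<in> A"
  shows "gen z \<Longrightarrow> card (Sep y0 z) = n \<Longrightarrow> \<exists>u\<in>Gs. Sep (u y0) z = {}"
proof (induction n arbitrary: z rule: less_induct)
  case (less n z)
  show ?case
  proof (cases "Sep y0 z = {}")
    case True
    have "id \<in> Gs" unfolding Gs_def by (rule gen_group.gen_id)
    thus ?thesis using True by (intro bexI[of _ id]) simp_all
  next
    case False
    hence "z \<notin> A" using A_Sep[OF y0] by blast
    then obtain a m where w: "wall a m" and H: "hyp a m \<in> Sep y0 z"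
      using exists_wall[OF y0 less.prems(1)] by blast
    let ?s = "aff_refl p a m"
    have aP: "a \<in> Phi" using wall_Phi[OF w] .
    have sW: "?s \<in> Wp Phi p" using Wp_gen[OF aP] .
    have ss: "?s (?s x) = x" for x using aff_refl_invol nonzero aP by blast
    have gsz: "gen (?s z)" using Wp_gen_pt[OF sW less.prems(1)] .
    have "card (Sep y0 (?s z)) = card (Sep (?s (?s y0)) (?s z))" using ss by simp
    also have "\<dots> = card (Sep (?s y0) z)" by (rule Wp_Sep_card[OF sW])
    also have "\<dots> = card (Sep y0 z - {hyp a m})" using Sep_drop_wall[OF y0 w less.prems(1) H] by simp
    also have "\<dots> < n" using less.prems(2) H Sep_finite by (metis card_Diff1_less)
    finally have lt: "card (Sep y0 (?s z)) < n" .
    obtain u where u: "u \<in> Gs" "Sep (u y0) (?s z) = {}" using less.IH[OF lt gsz refl] by blast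
    have "Sep (?s (u y0)) (?s (?s z)) = (\<lambda>H. ?s ` H) ` Sep (u y0) (?s z)" by (rule Wp_Sep[OF sW])
    hence "Sep ((?s \<circ> u) y0) z = {}" using u(2) ss by simp
    moreover have "?s \<circ> u \<in> Gs" using Gs_comp Gs_gen[OF w] u(1) by blast
    ultimately show ?thesis by blast
  qed
qed

lemma lemmaT': "y0 \<in> A \<Longrightarrow> gen z \<Longrightarrow> \<exists>u\<in>Gs. Sep (u y0) z = {}"
  using lemmaT by blast

end


context rs begin

lemma GP: assumes aPos: "a \<in> Pos"
  shows "\<exists>z. gen z \<and> Sep z (aff_refl p a m z) = {hyp a m}"
proof -
  have aP: "a \<in> Phi" using aPos PosPhi by auto
  have a0: "a \<noteq> 0" using nonzero aP by blast
  have aa: "a \<bullet> a > 0" using a0 by simp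
  define D where "D = (\<lambda>b. b - ((b \<bullet> a) / (a \<bullet> a)) *\<^sub>R a) ` (Pos - {a})"
  have fD: "finite D" unfolding D_def using finPhi PosPhi finite_subset by blast
  have D0: "0 \<notin> D"
  proof
    assume "0 \<in> D"
    then obtain b where b0: "b \<in> Pos - {a}" "0 = b - ((b \<bullet> a) / (a \<bullet> a)) *\<^sub>R a"
      unfolding D_def image_iff by blast
    hence b: "b \<in> Pos" "b \<noteq> a" "b - ((b \<bullet> a) / (a \<bullet> a)) *\<^sub>R a = 0" by auto
    hence bk: "b = ((b \<bullet> a) / (a \<bullet> a)) *\<^sub>R a" by simp
    have "b \<in> Phi" using b PosPhi by auto
    hence "(b \<bullet> a) / (a \<bullet> a) = 1 \<or> (b \<bullet> a) / (a \<bullet> a) = -1" using reduced[OF aP] bk by metis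
    thus False
    proof
      assume h1: "(b \<bullet> a) / (a \<bullet> a) = 1"
      have "b = a" by (subst bk) (simp only: h1 scaleR_one)
      thus False using b(2) by simp
    next
      assume "(b \<bullet> a) / (a \<bullet> a) = -1" hence "b = - a" using bk by simp
      thus False using b(1) aPos Pos_neg_not by blast
    qed
  qed
  obtain v where v: "\<forall>d\<in>D. v \<bullet> d \<noteq> 0" using avoid_vec[OF fD D0] by blast
  define w where "w = v - ((v \<bullet> a) / (a \<bullet> a)) *\<^sub>R a"
  have wa: "w \<bullet> a = 0" unfolding w_def using aa by (simp add: inner_diff_left)
  have wb: "b \<in> Pos \<Longrightarrow> b \<noteq> a \<Longrightarrow> w \<bullet> b \<noteq> 0" for b
  proof -
    assume b: "b \<in> Pos" "b \<noteq> a"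
    have "b - ((b \<bullet> a) / (a \<bullet> a)) *\<^sub>R a \<in> D" unfolding D_def using b by blast
    hence "v \<bullet> (b - ((b \<bullet> a) / (a \<bullet> a)) *\<^sub>R a) \<noteq> 0" using v by blast
    moreover have "w \<bullet> b = v \<bullet> (b - ((b \<bullet> a) / (a \<bullet> a)) *\<^sub>R a)"
      unfolding w_def by (simp add: inner_diff_left inner_diff_right inner_commute)
    ultimately show ?thesis by simp
  qed
  have cwa: "cop w a = 0" unfolding cop_def using wa by simp
  have cwb: "b \<in> Pos \<Longrightarrow> b \<noteq> a \<Longrightarrow> cop w b \<noteq> 0" for b
    unfolding cop_def using wb Pos_nonzero by simp
  define q0 where "q0 = (of_int m * real p / 2) *\<^sub>R a"
  have cq0a: "cop q0 a = of_int m * real p" unfolding q0_def using a0 by (simp add: cop_scale cop_self)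
  have finPa: "finite (Pos - {a})" using finPhi PosPhi finite_subset by blast
  have "\<forall>b\<in>Pos - {a}. eventually (\<lambda>s. \<forall>k::int. cop q0 b + s * cop w b \<noteq> of_int k * real p) (at_right 0)"
    using NM[OF ppos] cwb by blast
  hence "eventually (\<lambda>s. \<forall>b\<in>Pos - {a}. \<forall>k::int. cop q0 b + s * cop w b \<noteq> of_int k * real p) (at_right 0)"
    by (rule eventually_ball_finite[OF finPa])
  from ev_pick[OF this] obtain s where s: "\<forall>b\<in>Pos - {a}. \<forall>k::int. cop q0 b + s * cop w b \<noteq> of_int k * real p"
    by blast
  define q where "q = q0 + s *\<^sub>R w"
  have cqb: "cop q b = cop q0 b + s * cop w b" for b unfolding q_def by (simp add: cop_add cop_scale)
  have cqa: "cop q a = of_int m * real p" using cqb cwa cq0a by simp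
  have qgen: "\<forall>b\<in>Pos - {a}. \<forall>k::int. cop q b \<noteq> of_int k * real p" using s cqb by simp
  have "\<forall>b\<in>Pos - {a}. eventually (\<lambda>\<delta>. \<forall>k::int. (cop q b + \<delta> * cop a b - of_int k * real p) *
        (cop q b - \<delta> * cop a b - of_int k * real p) > 0) (at_right 0)"
  proof
    fix b assume "b \<in> Pos - {a}"
    hence "\<forall>k::int. cop q b \<noteq> of_int k * real p" using qgen by blast
    thus "eventually (\<lambda>\<delta>. \<forall>k::int. (cop q b + \<delta> * cop a b - of_int k * real p) *
        (cop q b - \<delta> * cop a b - of_int k * real p) > 0) (at_right 0)" by (rule NM2[OF ppos])
  qed
  hence e1: "eventually (\<lambda>\<delta>. \<forall>b\<in>Pos - {a}. \<forall>k::int. (cop q b + \<delta> * cop a b - of_int k * real p) *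
        (cop q b - \<delta> * cop a b - of_int k * real p) > 0) (at_right 0)"
    by (rule eventually_ball_finite[OF finPa])
  have e2: "eventually (\<lambda>\<delta>. -1 < 0 + \<delta> * 1 \<and> 0 + \<delta> * 1 < real p / 2) (at_right 0)"
    by (rule ev_lin) (use ppos in auto)
  from ev_pick[OF eventually_conj[OF e1 e2]] obtain \<delta> where \<delta>: "\<delta> > 0"
    "\<forall>b\<in>Pos - {a}. \<forall>k::int. (cop q b + \<delta> * cop a b - of_int k * real p) * (cop q b - \<delta> * cop a b - of_int k * real p) > 0"
    "\<delta> < real p / 2" by auto
  define z where "z = q + \<delta> *\<^sub>R a"
  let ?r = "aff_refl p a m"
  have czb: "cop z b = cop q b + \<delta> * cop a b" for b unfolding z_def by (simp add: cop_add cop_scale)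
  have cza: "cop z a = of_int m * real p + 2 * \<delta>" using czb cqa cop_self[OF a0] by simp
  have rz: "?r z = q - \<delta> *\<^sub>R a"
    unfolding aff_refl_eq cza unfolding z_def by (simp add: algebra_simps) (metis mult_2_right scaleR_left_distrib)
  have crzb: "cop (?r z) b = cop q b - \<delta> * cop a b" for b unfolding rz by (simp add: cop_diff cop_scale)
  have crza: "cop (?r z) a = of_int m * real p - 2 * \<delta>" using crzb cqa cop_self[OF a0] by simp
  have keya: "(cop z a - of_int k * real p) * (cop (?r z) a - of_int k * real p) < 0 \<longleftrightarrow> k = m" for k
  proof
    assume neg: "(cop z a - of_int k * real p) * (cop (?r z) a - of_int k * real p) < 0"
    show "k = m"
    proof (rule ccontr)
      assume km: "k \<noteq> m"
      show False
      proof (cases "k < m")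
        case True
        hence "real_of_int m - real_of_int k \<ge> 1" by linarith
        hence "(real_of_int m - real_of_int k) * real p \<ge> 1 * real p" by (intro mult_right_mono) auto
        hence "cop z a - of_int k * real p > 0" "cop (?r z) a - of_int k * real p > 0"
          using cza crza \<delta> by (simp_all add: algebra_simps)
        hence "0 < (cop z a - of_int k * real p) * (cop (?r z) a - of_int k * real p)" by (rule mult_pos_pos)
        thus False using neg by linarith
      next
        case False
        hence "real_of_int k - real_of_int m \<ge> 1" using km by linarith
        hence "(real_of_int k - real_of_int m) * real p \<ge> 1 * real p" by (intro mult_right_mono) auto
        hence "cop z a - of_int k * real p < 0" "cop (?r z) a - of_int k * real p < 0"
          using cza crza \<delta> by (simp_all add: algebra_simps)
        hence "0 < (cop z a - of_int k * real p) * (cop (?r z) a - of_int k * real p)" by (rule mult_neg_neg)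
        thus False using neg by linarith
      qed
    qed
  next
    assume "k = m"
    hence "(cop z a - of_int k * real p) * (cop (?r z) a - of_int k * real p) = - (4 * (\<delta> * \<delta>))"
      using cza crza by simp
    moreover have "\<delta> * \<delta> > 0" using \<delta>(1) by simp
    ultimately show "(cop z a - of_int k * real p) * (cop (?r z) a - of_int k * real p) < 0" by linarith
  qed
  have gz: "gen z" unfolding gen_iff
  proof (intro ballI allI notI)
    fix b k assume b: "b \<in> Pos" and eq: "cop z b = of_int k * real p"
    show False
    proof (cases "b = a")
      case True
      have "(cop z a - of_int k * real p) * (cop (?r z) a - of_int k * real p) = 0" using eq True by simp
      hence "\<not> (k = m)" using keya by (metis less_irrefl)
      moreover have "k = m"
      proof (rule ccontr)
        assume km: "k \<noteq> m"
        show False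
        proof (cases "k < m")
          case True
          hence "real_of_int m - real_of_int k \<ge> 1" by linarith
          hence "(real_of_int m - real_of_int k) * real p \<ge> 1 * real p" by (intro mult_right_mono) auto
          thus False using eq \<open>b = a\<close> cza \<delta> by (simp add: algebra_simps)
        next
          case False
          hence "real_of_int k - real_of_int m \<ge> 1" using km by linarith
          hence "(real_of_int k - real_of_int m) * real p \<ge> 1 * real p" by (intro mult_right_mono) auto
          thus False using eq \<open>b = a\<close> cza \<delta> by (simp add: algebra_simps)
        qed
      qed
      ultimately show False by simp
    next
      case False
      hence "(cop q b + \<delta> * cop a b - of_int k * real p) * (cop q b - \<delta> * cop a b - of_int k * real p) > 0"
        using \<delta>(2) b by blast
      thus False using eq czb by simp
    qed
  qed
  have "Sep z (?r z) = {hyp a m}"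
  proof
    show "Sep z (?r z) \<subseteq> {hyp a m}"
    proof
      fix H assume H: "H \<in> Sep z (?r z)"
      have "H \<in> HYP" using H unfolding Sep_def by auto
      then obtain b k where b: "b \<in> Pos" "H = hyp b k" using HYP_Pos by blast
      have bP: "b \<in> Phi" using b PosPhi by auto
      have neg: "(cop z b - of_int k * real p) * (cop (?r z) b - of_int k * real p) < 0"
        using H b Sep_hyp_iff[OF bP] by auto
      have "b = a"
      proof (rule ccontr)
        assume "b \<noteq> a"
        hence "(cop q b + \<delta> * cop a b - of_int k * real p) * (cop q b - \<delta> * cop a b - of_int k * real p) > 0"
          using \<delta>(2) b by blast
        thus False using neg czb crzb by simp
      qed
      hence "k = m" using keya neg by simp
      thus "H \<in> {hyp a m}" using b \<open>b = a\<close> by simp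
    qed
  next
    have "hyp a m \<in> Sep z (?r z)" using Sep_hyp_iff[OF aP] keya by simp
    thus "{hyp a m} \<subseteq> Sep z (?r z)" by simp
  qed
  thus ?thesis using gz by blast
qed

end

context rs begin

lemma SG:
  assumes y0: "y0 \<in> A" and aP0: "a0 \<in> Phi"
  shows "aff_refl p a0 m0 \<in> Gs"
proof -
  obtain a m where aPos: "a \<in> Pos" and eqr: "aff_refl p a0 m0 = aff_refl p a m"
    using normalize[OF aP0, of m0] by blast
  have aP: "a \<in> Phi" using aPos PosPhi by auto
  let ?r = "aff_refl p a m"
  have rW: "?r \<in> Wp Phi p" using Wp_gen[OF aP] .
  obtain z where gz: "gen z" and Sz: "Sep z (?r z) = {hyp a m}" using GP[OF aPos] by blast
  obtain u where uG: "u \<in> Gs" and Su: "Sep (u y0) z = {}" using lemmaT'[OF y0 gz] by blast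
  obtain u' where u'G: "u' \<in> Gs" and uu': "u \<circ> u' = id" "u' \<circ> u = id" using Gs_inv[OF uG] by blast
  have uW: "u \<in> Wp Phi p" and u'W: "u' \<in> Wp Phi p" using Gs_Wp uG u'G by auto
  have gy0: "gen y0" using A_gen[OF y0] .
  have guy: "gen (u y0)" using Wp_gen_pt[OF uW gy0] .
  have grz: "gen (?r z)" using Wp_gen_pt[OF rW gz] .
  have gruy: "gen (?r (u y0))" using Wp_gen_pt[OF rW guy] .
  have S3: "Sep (?r z) (?r (u y0)) = {}" using Wp_Sep[OF rW, of z "u y0"] Su Sep_sym by simp
  have S: "Sep (u y0) (?r (u y0)) = {hyp a m}"
  proof -
    have "X \<in> Sep (u y0) (?r (u y0)) \<longleftrightarrow> X \<in> {hyp a m}" for X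
    proof -
      have "X \<in> Sep (u y0) (?r (u y0)) \<longleftrightarrow> (X \<in> Sep (u y0) z \<longleftrightarrow> X \<notin> Sep z (?r (u y0)))"
        by (rule Sep_trans[OF guy gz gruy])
      also have "\<dots> \<longleftrightarrow> X \<in> Sep z (?r (u y0))" using Su by simp
      also have "\<dots> \<longleftrightarrow> (X \<in> Sep z (?r z) \<longleftrightarrow> X \<notin> Sep (?r z) (?r (u y0)))"
        by (rule Sep_trans[OF gz grz gruy])
      also have "\<dots> \<longleftrightarrow> X \<in> Sep z (?r z)" using S3 by simp
      finally show ?thesis using Sz by simp
    qed
    thus ?thesis by auto
  qed
  define z2 where "z2 = u' (?r (u y0))"
  have u'u: "u' (u y0) = y0" using uu'(2) by (metis comp_apply id_apply)
  have "Sep y0 z2 = Sep (u' (u y0)) (u' (?r (u y0)))" unfolding z2_def u'u ..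
  also have "\<dots> = (\<lambda>H. u' ` H) ` Sep (u y0) (?r (u y0))" by (rule Wp_Sep[OF u'W])
  finally have S2: "Sep y0 z2 = {u' ` hyp a m}" using S by simp
  have gz2: "gen z2" unfolding z2_def using Wp_gen_pt[OF u'W gruy] .
  have "z2 \<notin> A" using A_Sep[OF y0] S2 by blast
  then obtain b k where wb: "wall b k" and Hb: "hyp b k \<in> Sep y0 z2" using exists_wall[OF y0 gz2] by blast
  have hb: "hyp b k = u' ` hyp a m" using Hb S2 by simp
  obtain c k' where c: "c \<in> Phi" "u' ` hyp a m = hyp c k'" "u' \<circ> ?r = aff_refl p c k' \<circ> u'"
    using Wp_conj[OF u'W aP] by blast
  have "aff_refl p c k' = aff_refl p b k" using hyp_unique[OF c(1) wall_Phi[OF wb]] hb c(2) by simp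
  hence e: "u' \<circ> ?r = aff_refl p b k \<circ> u'" using c(3) by simp
  have "?r = u \<circ> (u' \<circ> ?r)" using uu'(1) by (simp add: comp_assoc[symmetric])
  also have "\<dots> = u \<circ> (aff_refl p b k \<circ> u')" using e by simp
  finally have "?r = u \<circ> (aff_refl p b k \<circ> u')" .
  moreover have "u \<circ> (aff_refl p b k \<circ> u') \<in> Gs" using Gs_comp Gs_gen[OF wb] uG u'G by blast
  ultimately show ?thesis using eqr by simp
qed

lemma Wp_Gs: assumes y0: "y0 \<in> A" shows "w \<in> Wp Phi p \<Longrightarrow> w \<in> Gs"
proof (induction w rule: Wp_induct)
  case id show ?case unfolding Gs_def by (rule gen_group.gen_id)
next
  case (step a m w) thus ?case using Gs_comp SG[OF y0] by blast
qed

end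

lemma prodl_Nil[simp]: "prodl [] = id" unfolding prodl_def by simp
lemma prodl_Cons[simp]: "prodl (f # fs) = f \<circ> prodl fs" unfolding prodl_def by simp
lemma prodl_append: "prodl (xs @ ys) = prodl xs \<circ> prodl ys"
  by (induction xs) (auto simp: comp_assoc)

context rs begin

definition RR :: "'a \<times> int \<Rightarrow> 'a \<Rightarrow> 'a" where
  "RR x = aff_refl p (fst x) (snd x)"

definition walls :: "('a \<times> int) list \<Rightarrow> bool" where
  "walls ws \<longleftrightarrow> (\<forall>x\<in>set ws. wall (fst x) (snd x))"

lemma Gs_list: "u \<in> Gs \<Longrightarrow> \<exists>ws. walls ws \<and> u = prodl (map RR ws)"
  unfolding Gs_def
proof (induction u rule: gen_group.induct)
  case gen_id show ?case by (intro exI[of _ "[]"]) (simp add: walls_def)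
next
  case (gen_step s w)
  then obtain ws where ws: "walls ws" "w = prodl (map RR ws)" by blast
  obtain a m where s: "s = aff_refl p a m" "wall a m" using gen_step(1) by blast
  have "walls ((a, m) # ws)" using ws(1) s(2) unfolding walls_def by simp
  moreover have "s \<circ> w = prodl (map RR ((a, m) # ws))" using s ws by (simp add: RR_def)
  ultimately show ?case by blast
qed

lemma Pr_Wp: "walls ws \<Longrightarrow> prodl (map RR ws) \<in> Wp Phi p"
proof (induction ws)
  case Nil show ?case using Wp_id by (simp add: id_def)
next
  case (Cons x ws)
  have "wall (fst x) (snd x)" "walls ws" using Cons(2) unfolding walls_def by auto
  hence "RR x \<in> Wp Phi p" "prodl (map RR ws) \<in> Wp Phi p"
    using Cons(1) Wp_gen wall_Phi unfolding RR_def by auto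
  hence "RR x \<circ> prodl (map RR ws) \<in> Wp Phi p" by (rule Wp_comp)
  thus ?case by (simp only: list.map prodl_Cons)
qed

lemma RR_invol: "wall (fst x) (snd x) \<Longrightarrow> RR x \<circ> RR x = id"
  unfolding RR_def using aff_refl_comp nonzero wall_Phi by blast

lemma walls_append: "walls (xs @ ys) \<longleftrightarrow> walls xs \<and> walls ys"
  unfolding walls_def set_append ball_Un ..

lemma walls_take: "walls ws \<Longrightarrow> walls (take j ws)"
  unfolding walls_def by (metis in_set_takeD)
lemma walls_drop: "walls ws \<Longrightarrow> walls (drop j ws)"
  unfolding walls_def by (metis in_set_dropD)

lemma folding:
  assumes y0: "y0 \<in> A"
  shows "walls ws \<Longrightarrow> Sep y0 (prodl (map RR ws) y0) = {} \<Longrightarrow> prodl (map RR ws) = id"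
proof (induction "length ws" arbitrary: ws rule: less_induct)
  case less
  show ?case
  proof (cases ws)
    case Nil thus ?thesis by simp
  next
    case (Cons x1 rest)
    define n where "n = length ws"
    define Q where "Q j = prodl (map RR (take j ws))" for j
    define g where "g j = Q j y0" for j
    have QW: "Q j \<in> Wp Phi p" for j unfolding Q_def using Pr_Wp walls_take less.prems(1) by blast
    have gy0: "gen y0" using A_gen[OF y0] .
    have gg: "gen (g j)" for j unfolding g_def using Wp_gen_pt[OF QW gy0] .
    have wj: "j < n \<Longrightarrow> wall (fst (ws ! j)) (snd (ws ! j))" for j
      using less.prems(1) nth_mem unfolding walls_def n_def by blast
    have step: "j < n \<Longrightarrow> Sep (g j) (g (Suc j)) = {Q j ` hyp (fst (ws ! j)) (snd (ws ! j))}" for j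
    proof -
      assume jn: "j < n"
      have "take (Suc j) ws = take j ws @ [ws ! j]" using jn unfolding n_def by (simp add: take_Suc_conv_app_nth)
      hence "Q (Suc j) = Q j \<circ> RR (ws ! j)" unfolding Q_def by (simp add: prodl_append)
      hence "g (Suc j) = Q j (RR (ws ! j) y0)" unfolding g_def by simp
      hence "Sep (g j) (g (Suc j)) = (\<lambda>H. Q j ` H) ` Sep y0 (RR (ws ! j) y0)"
        unfolding g_def using Wp_Sep[OF QW] by simp
      also have "Sep y0 (RR (ws ! j) y0) = {hyp (fst (ws ! j)) (snd (ws ! j))}"
        unfolding RR_def by (rule crossing[OF y0 wj[OF jn]])
      finally show ?thesis by simp
    qed
    obtain a1 m1 where x1: "x1 = (a1, m1)" by (cases x1)
    have n1: "n \<ge> 1" unfolding n_def Cons by simp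
    have w1: "wall a1 m1" using wj[of 0] n1 Cons x1 by simp
    define H1 where "H1 = hyp a1 m1"
    have g0: "g 0 = y0" unfolding g_def Q_def by simp
    have H01: "H1 \<in> Sep (g 0) (g 1)" using step[of 0] n1 Cons x1 unfolding Q_def H1_def by simp
    have gn: "g n = prodl (map RR ws) y0" unfolding g_def Q_def n_def by simp
    have H0n: "H1 \<notin> Sep (g 0) (g n)" using less.prems(2) g0 gn by simp
    have "\<exists>j. 1 \<le> j \<and> j < n \<and> H1 \<in> Sep (g j) (g (Suc j))"
    proof (rule ccontr)
      assume nex: "\<not> (\<exists>j. 1 \<le> j \<and> j < n \<and> H1 \<in> Sep (g j) (g (Suc j)))"
      have "1 \<le> j \<Longrightarrow> j \<le> n \<Longrightarrow> H1 \<in> Sep (g 0) (g j)" for j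
      proof (induction j)
        case 0 thus ?case by simp
      next
        case (Suc j)
        show ?case
        proof (cases "j = 0")
          case True thus ?thesis using H01 by simp
        next
          case False
          hence "H1 \<in> Sep (g 0) (g j)" using Suc by simp
          moreover have "H1 \<notin> Sep (g j) (g (Suc j))" using nex False Suc(3) by simp
          ultimately show ?thesis using Sep_trans[OF gg[of 0] gg[of j] gg[of "Suc j"], of H1] by simp
        qed
      qed
      thus False using H0n n1 by simp
    qed
    then obtain j where j: "1 \<le> j" "j < n" "H1 \<in> Sep (g j) (g (Suc j))" by blast
    obtain a' m' where wsj: "ws ! j = (a', m')" by (cases "ws ! j")
    have w': "wall a' m'" using wj[OF j(2)] wsj by simp
    have QH: "Q j ` hyp a' m' = H1" using step[OF j(2)] j(3) wsj by simp
    obtain c k' where c: "c \<in> Phi" "Q j ` hyp a' m' = hyp c k'" "Q j \<circ> aff_refl p a' m' = aff_refl p c k' \<circ> Q j"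
      using Wp_conj[OF QW wall_Phi[OF w']] by blast
    have "aff_refl p c k' = aff_refl p a1 m1"
      using hyp_unique[OF c(1) wall_Phi[OF w1]] QH c(2) unfolding H1_def by simp
    hence conj: "Q j \<circ> RR (ws ! j) = RR x1 \<circ> Q j" using c(3) wsj x1 unfolding RR_def by simp
    define P' where "P' = prodl (map RR (take (j - 1) rest))"
    obtain j1 where j1: "j = Suc j1" using j(1) by (cases j) auto
    have "take j ws = x1 # take (j - 1) rest" unfolding j1 Cons by simp
    hence Qj: "Q j = RR x1 \<circ> P'" unfolding Q_def P'_def by simp
    have "take (Suc j) ws = take j ws @ [ws ! j]" using j(2) unfolding n_def by (simp add: take_Suc_conv_app_nth)
    hence "Q (Suc j) = Q j \<circ> RR (ws ! j)" unfolding Q_def by (simp add: prodl_append)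
    also have "\<dots> = RR x1 \<circ> (RR x1 \<circ> P')" using conj Qj by simp
    also have "\<dots> = P'" using RR_invol[of x1] w1 x1 by (simp add: comp_assoc[symmetric])
    finally have QS: "Q (Suc j) = P'" .
    define ws' where "ws' = take (j - 1) rest @ drop (Suc j) ws"
    have "prodl (map RR ws) = prodl (map RR (take (Suc j) ws @ drop (Suc j) ws))" by (simp only: append_take_drop_id)
    also have "\<dots> = Q (Suc j) \<circ> prodl (map RR (drop (Suc j) ws))" unfolding Q_def by (simp only: map_append prodl_append)
    also have "\<dots> = prodl (map RR ws')" unfolding QS P'_def ws'_def by (simp add: prodl_append)
    finally have eqw: "prodl (map RR ws) = prodl (map RR ws')" .
    have "length ws' = min (j - 1) (length rest) + (length ws - Suc j)" unfolding ws'_def by simp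
    moreover have "length ws = Suc (length rest)" using Cons by simp
    ultimately have lt: "length ws' < length ws" using j unfolding n_def by linarith
    have wws: "walls ws'"
    proof -
      have "walls rest" using less.prems(1) Cons unfolding walls_def by simp
      hence "walls (take (j - 1) rest)" "walls (drop (Suc j) ws)" using walls_take walls_drop less.prems(1) by blast+
      thus ?thesis unfolding ws'_def walls_append by simp
    qed
    have sw: "Sep y0 (prodl (map RR ws') y0) = {}" using less.prems(2) eqw by simp
    have "prodl (map RR ws') = id" by (rule less.hyps[OF lt wws sw])
    thus ?thesis using eqw by simp
  qed
qed

lemma free_action:
  assumes y0: "y0 \<in> A" and w: "w \<in> Wp Phi p" and S: "Sep y0 (w y0) = {}"
  shows "w = id"
proof -
  have "w \<in> Gs" by (rule Wp_Gs[OF y0 w])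
  from Gs_list[OF this] obtain ws where ws: "walls ws" "w = prodl (map RR ws)" by blast
  show ?thesis using folding[OF y0 ws(1)] S ws(2) by simp
qed

end

lemma zspanI: "x = (\<Sum>b\<in>B. of_int (c b) *\<^sub>R b) \<Longrightarrow> x \<in> zspan B"
  unfolding zspan_def by blast

lemma zspan_add: assumes "x \<in> zspan B" "y \<in> zspan B" shows "x + y \<in> zspan B"
proof -
  obtain c d where c: "x = (\<Sum>b\<in>B. of_int (c b) *\<^sub>R b)" and d: "y = (\<Sum>b\<in>B. of_int (d b) *\<^sub>R b)"
    using assms unfolding zspan_def by blast
  have "x + y = (\<Sum>b\<in>B. of_int (c b + d b) *\<^sub>R b)"
    unfolding c d by (simp add: sum.distrib[symmetric] scaleR_add_left)
  thus ?thesis by (rule zspanI)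
qed

lemma zspan_scale: assumes "x \<in> zspan B" shows "of_int n *\<^sub>R x \<in> zspan B"
proof -
  obtain c where c: "x = (\<Sum>b\<in>B. of_int (c b) *\<^sub>R b)" using assms unfolding zspan_def by blast
  have "of_int n *\<^sub>R x = (\<Sum>b\<in>B. of_int (n * c b) *\<^sub>R b)"
    unfolding c by (simp add: scaleR_sum_right)
  thus ?thesis by (rule zspanI)
qed

lemma zspan_zero: "0 \<in> zspan B"
proof -
  have "0 = (\<Sum>b\<in>B. of_int ((\<lambda>_. 0::int) b) *\<^sub>R b)" by simp
  thus ?thesis by (rule zspanI)
qed

lemma zspan_diff: assumes "x \<in> zspan B" "y \<in> zspan B" shows "x - y \<in> zspan B"
  using zspan_add[OF assms(1) zspan_scale[OF assms(2), of "-1"]] by simp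

lemma zspan_sum: "(\<And>i. i \<in> S \<Longrightarrow> f i \<in> zspan B) \<Longrightarrow> sum f S \<in> zspan B"
proof (induction S rule: infinite_finite_induct)
  case (infinite S) thus ?case using zspan_zero by simp
next
  case empty thus ?case using zspan_zero by simp
next
  case (insert x F)
  have "sum f (insert x F) = f x + sum f F" using insert.hyps by simp
  moreover have "f x \<in> zspan B" "sum f F \<in> zspan B" using insert by auto
  ultimately show ?case using zspan_add by simp
qed

lemma refl_sum: "refl a (sum f S) = (\<Sum>x\<in>S. refl a (f x))"
proof (induction S rule: infinite_finite_induct)
  case (infinite S) thus ?case by (simp add: refl_def cop_zero)
next
  case empty thus ?case by (simp add: refl_def cop_zero)
next
  case (insert x F) thus ?case by (simp add: refl_add)
qed

lemma sum_delta_scale: fixes S :: "'a::real_vector set" shows "finite S \<Longrightarrow> a \<in> S \<Longrightarrow> (\<Sum>b\<in>S. (if b = a then k else 0) *\<^sub>R b) = k *\<^sub>R a"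
proof -
  assume "finite S" "a \<in> S"
  have "(\<Sum>b\<in>S. (if b = a then k else 0) *\<^sub>R b) = (\<Sum>b\<in>S. if b = a then k *\<^sub>R b else 0)"
    by (intro sum.cong) auto
  also have "\<dots> = k *\<^sub>R a" using \<open>finite S\<close> \<open>a \<in> S\<close> by (simp add: sum.delta')
  finally show ?thesis .
qed

lemma WIp_span: "u \<in> WIp I p \<Longrightarrow> u y - y \<in> span I"
  unfolding WIp_def
proof (induction u arbitrary: y rule: gen_group.induct)
  case gen_id thus ?case by (simp add: span_zero)
next
  case (gen_step s w)
  have "s (w y) - w y \<in> span I"
    using gen_step(1)
  proof
    assume "s \<in> {refl a |a. a \<in> I}"
    then obtain a where a: "s = refl a" "a \<in> I" by blast
    have "s (w y) - w y = (- cop (w y) a) *\<^sub>R a" unfolding a refl_def by simp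
    thus ?thesis using span_scale[OF span_base[OF a(2)], of "- cop (w y) a"] by simp
  next
    assume "s \<in> {transl ((of_int m * real p) *\<^sub>R a) |a m. a \<in> I}"
    then obtain a m where a: "s = transl ((of_int m * real p) *\<^sub>R a)" "a \<in> I" by blast
    have "s (w y) - w y = (of_int m * real p) *\<^sub>R a" unfolding a transl_def by simp
    thus ?thesis using span_scale[OF span_base[OF a(2)], of "of_int m * real p"] by simp
  qed
  moreover have "w y - y \<in> span I" using gen_step(3) .
  ultimately have "(s (w y) - w y) + (w y - y) \<in> span I" by (rule span_add)
  thus ?case by simp
qed

locale rsx = rs Phi Pos p for Phi Pos :: "'a::euclidean_space set" and p +
  fixes X Simp :: "'a set"
  assumes std: "std_root_datum X Phi Pos Simp"
begin

lemma stdc: "(\<exists>B. independent B \<and> span B = UNIV \<and> X = zspan B) \<and>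
     finite Phi \<and> 0 \<notin> Phi \<and> Phi \<subseteq> X \<and>
     (\<forall>x\<in>X. \<forall>a\<in>Phi. cop x a \<in> \<int>) \<and>
     (\<forall>a\<in>Phi. \<forall>b\<in>Phi. refl a b \<in> Phi) \<and>
     (\<forall>a\<in>Phi. \<forall>c::real. c *\<^sub>R a \<in> Phi \<longrightarrow> c = 1 \<or> c = -1) \<and>
     Pos \<subseteq> Phi \<and> Phi = Pos \<union> uminus ` Pos \<and> Pos \<inter> uminus ` Pos = {} \<and>
     Simp \<subseteq> Pos \<and> independent Simp \<and>
     (\<forall>a\<in>Pos. \<exists>c::'a \<Rightarrow> nat. a = (\<Sum>b\<in>Simp. of_nat (c b) *\<^sub>R b)) \<and>
     (\<forall>a\<in>Simp. \<exists>x\<in>X. \<forall>b\<in>Simp. cop x b = (if b = a then 1 else 0))"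
  using std unfolding std_root_datum_def .

lemma XB: "\<exists>B. independent B \<and> span B = UNIV \<and> X = zspan B" using stdc by (rule conjunct1)
lemma PhiX: "Phi \<subseteq> X"
  using stdc[THEN conjunct2, THEN conjunct2, THEN conjunct2, THEN conjunct1] .
lemma Xint0: "\<forall>x\<in>X. \<forall>a\<in>Phi. cop x a \<in> \<int>"
  using stdc[THEN conjunct2, THEN conjunct2, THEN conjunct2, THEN conjunct2, THEN conjunct1] .
lemma Xint: "x \<in> X \<Longrightarrow> a \<in> Phi \<Longrightarrow> cop x a \<in> \<int>" using Xint0 by blast
lemma stdc2: "Simp \<subseteq> Pos \<and> independent Simp \<and>
     (\<forall>a\<in>Pos. \<exists>c::'a \<Rightarrow> nat. a = (\<Sum>b\<in>Simp. of_nat (c b) *\<^sub>R b)) \<and>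
     (\<forall>a\<in>Simp. \<exists>x\<in>X. \<forall>b\<in>Simp. cop x b = (if b = a then 1 else 0))"
  using stdc[THEN conjunct2, THEN conjunct2, THEN conjunct2, THEN conjunct2, THEN conjunct2,
     THEN conjunct2, THEN conjunct2, THEN conjunct2, THEN conjunct2, THEN conjunct2] .
lemma SimpPos: "Simp \<subseteq> Pos" using stdc2 by (rule conjunct1)
lemma indSimp: "independent Simp" using stdc2[THEN conjunct2, THEN conjunct1] .
lemma finSimp: "finite Simp" using indSimp independent_bound_general by blast
lemma Pos_decomp0: "\<forall>a\<in>Pos. \<exists>c::'a \<Rightarrow> nat. a = (\<Sum>b\<in>Simp. of_nat (c b) *\<^sub>R b)"
  using stdc2[THEN conjunct2, THEN conjunct2, THEN conjunct1] .
lemma Pos_decomp: "a \<in> Pos \<Longrightarrow> \<exists>c::'a \<Rightarrow> nat. a = (\<Sum>b\<in>Simp. of_nat (c b) *\<^sub>R b)"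
  using Pos_decomp0 by (rule bspec)
lemma fund0: "\<forall>a\<in>Simp. \<exists>x\<in>X. \<forall>b\<in>Simp. cop x b = (if b = a then 1 else 0)"
  using stdc2[THEN conjunct2, THEN conjunct2, THEN conjunct2] .
lemma fund: "a \<in> Simp \<Longrightarrow> \<exists>x\<in>X. \<forall>b\<in>Simp. cop x b = (if b = a then 1 else 0)"
  using fund0 by (rule bspec)

lemma X_add: "x \<in> X \<Longrightarrow> y \<in> X \<Longrightarrow> x + y \<in> X" using XB zspan_add by blast
lemma X_diff: "x \<in> X \<Longrightarrow> y \<in> X \<Longrightarrow> x - y \<in> X" using XB zspan_diff by blast
lemma X_scale: "x \<in> X \<Longrightarrow> of_int n *\<^sub>R x \<in> X" using XB zspan_scale by blast
lemma X_sum: "(\<And>i. i \<in> S \<Longrightarrow> f i \<in> X) \<Longrightarrow> sum f S \<in> X"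
proof -
  assume h: "\<And>i. i \<in> S \<Longrightarrow> f i \<in> X"
  obtain B where B: "X = zspan B" using XB by blast
  show ?thesis using h unfolding B by (rule zspan_sum)
qed

lemma indep_coeff:
  assumes "(\<Sum>b\<in>Simp. u b *\<^sub>R b) = 0" "b \<in> Simp" shows "u b = 0"
proof -
  have "finite Simp \<and> (\<forall>c. (\<Sum>v\<in>Simp. c v *\<^sub>R v) = 0 \<longrightarrow> (\<forall>v\<in>Simp. c v = 0))"
    using indSimp unfolding independent_explicit .
  hence "(\<Sum>v\<in>Simp. u v *\<^sub>R v) = 0 \<longrightarrow> (\<forall>v\<in>Simp. u v = 0)" by (rule conjunct2[THEN spec])
  thus ?thesis using assms by blast
qed

lemma refl_simple_Pos:
  assumes \<alpha>: "\<alpha> \<in> Simp" and \<beta>: "\<beta> \<in> Pos" and ne: "\<beta> \<noteq> \<alpha>"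
  shows "refl \<alpha> \<beta> \<in> Pos \<and> refl \<alpha> \<beta> \<noteq> \<alpha>"
proof -
  have \<alpha>Pos: "\<alpha> \<in> Pos" using \<alpha> SimpPos by auto
  have \<alpha>P: "\<alpha> \<in> Phi" and \<beta>P: "\<beta> \<in> Phi" using \<alpha>Pos \<beta> PosPhi by auto
  have \<alpha>0: "\<alpha> \<noteq> 0" using nonzero \<alpha>P by blast
  obtain c where c: "\<beta> = (\<Sum>b\<in>Simp. of_nat (c b) *\<^sub>R b)" using Pos_decomp[OF \<beta>] by blast
  have ex: "\<exists>\<gamma>\<in>Simp. \<gamma> \<noteq> \<alpha> \<and> c \<gamma> > 0"
  proof (rule ccontr)
    assume "\<not> (\<exists>\<gamma>\<in>Simp. \<gamma> \<noteq> \<alpha> \<and> c \<gamma> > 0)"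
    hence z: "\<forall>\<gamma>\<in>Simp. \<gamma> \<noteq> \<alpha> \<longrightarrow> c \<gamma> = 0" by auto
    have "\<beta> = (\<Sum>b\<in>Simp. (if b = \<alpha> then of_nat (c \<alpha>) else 0) *\<^sub>R b)"
      unfolding c by (rule sum.cong) (use z in auto)
    also have "\<dots> = of_nat (c \<alpha>) *\<^sub>R \<alpha>" by (rule sum_delta_scale[OF finSimp \<alpha>])
    finally have "\<beta> = real (c \<alpha>) *\<^sub>R \<alpha>" by simp
    moreover have "real (c \<alpha>) *\<^sub>R \<alpha> \<in> Phi" using \<beta>P calculation by simp
    hence "real (c \<alpha>) = 1 \<or> real (c \<alpha>) = -1" by (rule reduced[OF \<alpha>P])
    ultimately have "\<beta> = \<alpha>" by auto
    thus False using ne by simp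
  qed
  then obtain \<gamma> where \<gamma>: "\<gamma> \<in> Simp" "\<gamma> \<noteq> \<alpha>" "c \<gamma> > 0" by blast
  have rP: "refl \<alpha> \<beta> \<in> Phi" using reflPhi[OF \<alpha>P \<beta>P] .
  have pos: "refl \<alpha> \<beta> \<in> Pos"
  proof (rule ccontr)
    assume "refl \<alpha> \<beta> \<notin> Pos"
    hence "- refl \<alpha> \<beta> \<in> Pos" using Phi_cases rP by blast
    then obtain d where d: "- refl \<alpha> \<beta> = (\<Sum>b\<in>Simp. of_nat (d b) *\<^sub>R b)" using Pos_decomp by blast
    have "(\<Sum>b\<in>Simp. (of_nat (c b) + of_nat (d b) - (if b = \<alpha> then cop \<beta> \<alpha> else 0)) *\<^sub>R b)
        = (\<Sum>b\<in>Simp. of_nat (c b) *\<^sub>R b) + (\<Sum>b\<in>Simp. of_nat (d b) *\<^sub>R b) - (\<Sum>b\<in>Simp. (if b = \<alpha> then cop \<beta> \<alpha> else 0) *\<^sub>R b)"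
      by (simp add: scaleR_add_left scaleR_diff_left sum.distrib sum_subtractf)
    also have "\<dots> = \<beta> + (- refl \<alpha> \<beta>) - cop \<beta> \<alpha> *\<^sub>R \<alpha>"
      unfolding c[symmetric] d[symmetric] sum_delta_scale[OF finSimp \<alpha>] ..
    also have "\<dots> = 0" unfolding refl_def by simp
    finally have "(of_nat (c \<gamma>) + of_nat (d \<gamma>) - (if \<gamma> = \<alpha> then cop \<beta> \<alpha> else 0)) = (0::real)"
      by (rule indep_coeff[OF _ \<gamma>(1)])
    hence "real (c \<gamma>) + real (d \<gamma>) = 0" using \<gamma>(2) by simp
    thus False using \<gamma>(3) by simp
  qed
  moreover have "refl \<alpha> \<beta> \<noteq> \<alpha>"
  proof
    assume "refl \<alpha> \<beta> = \<alpha>"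
    hence "\<beta> = refl \<alpha> \<alpha>" using refl_refl[OF \<alpha>0, of \<beta>] by simp
    hence "\<beta> = - \<alpha>" using refl_self[OF \<alpha>0] by simp
    thus False using \<beta> \<alpha>Pos Pos_neg_not by blast
  qed
  ultimately show ?thesis by blast
qed

lemma cop_rho_simple:
  assumes \<alpha>: "\<alpha> \<in> Simp" shows "cop (rho Pos) \<alpha> = 1"
proof -
  have \<alpha>Pos: "\<alpha> \<in> Pos" using \<alpha> SimpPos by auto
  have \<alpha>P: "\<alpha> \<in> Phi" using \<alpha>Pos PosPhi by auto
  have \<alpha>0: "\<alpha> \<noteq> 0" using nonzero \<alpha>P by blast
  have finP: "finite Pos" using finPhi PosPhi finite_subset by blast
  define P' where "P' = Pos - {\<alpha>}"
  have into: "refl \<alpha> x \<in> P'" if "x \<in> P'" for x using refl_simple_Pos[OF \<alpha>] that unfolding P'_def by blast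
  have img: "refl \<alpha> ` P' = P'"
  proof
    show "refl \<alpha> ` P' \<subseteq> P'" using into by blast
    show "P' \<subseteq> refl \<alpha> ` P'"
    proof
      fix x assume "x \<in> P'"
      hence "refl \<alpha> x \<in> P'" "x = refl \<alpha> (refl \<alpha> x)" using into refl_refl[OF \<alpha>0] by auto
      thus "x \<in> refl \<alpha> ` P'" by blast
    qed
  qed
  have inj: "inj_on (refl \<alpha>) P'" by (rule inj_on_inverseI[of _ "refl \<alpha>"]) (simp add: refl_refl[OF \<alpha>0])
  have sP': "(\<Sum>x\<in>P'. refl \<alpha> x) = (\<Sum>x\<in>P'. x)"
  proof -
    have "(\<Sum>x\<in>P'. x) = (\<Sum>x\<in>refl \<alpha> ` P'. x)" using img by simp
    also have "\<dots> = (\<Sum>x\<in>P'. refl \<alpha> x)" by (simp add: sum.reindex[OF inj])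
    finally show ?thesis by simp
  qed
  have sPos: "(\<Sum>x\<in>Pos. x) = \<alpha> + (\<Sum>x\<in>P'. x)" unfolding P'_def using sum.remove[OF finP \<alpha>Pos, of "\<lambda>x. x"] .
  have "refl \<alpha> (\<Sum>x\<in>Pos. x) = - \<alpha> + (\<Sum>x\<in>P'. x)"
    unfolding sPos refl_add refl_sum sP' refl_self[OF \<alpha>0] ..
  moreover have "refl \<alpha> (\<Sum>x\<in>Pos. x) = (\<Sum>x\<in>Pos. x) - cop (\<Sum>x\<in>Pos. x) \<alpha> *\<^sub>R \<alpha>" unfolding refl_def ..
  ultimately have "(cop (\<Sum>x\<in>Pos. x) \<alpha> - 2) *\<^sub>R \<alpha> = 0" unfolding sPos by (simp add: algebra_simps scaleR_2)
  hence "cop (\<Sum>x\<in>Pos. x) \<alpha> = 2" using \<alpha>0 by simp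
  thus ?thesis unfolding rho_def cop_scale by simp
qed

lemma rho_int: assumes a: "a \<in> Phi" shows "cop (rho Pos) a \<in> \<int>"
proof -
  have "\<forall>\<alpha>\<in>Simp. \<exists>x. x \<in> X \<and> (\<forall>b\<in>Simp. cop x b = (if b = \<alpha> then 1 else 0))" using fund by blast
  from bchoice[OF this] obtain \<omega> where \<omega>0: "\<forall>\<alpha>\<in>Simp. \<omega> \<alpha> \<in> X \<and> (\<forall>b\<in>Simp. cop (\<omega> \<alpha>) b = (if b = \<alpha> then 1 else 0))"
    by blast
  have \<omega>: "\<And>\<alpha>. \<alpha> \<in> Simp \<Longrightarrow> \<omega> \<alpha> \<in> X \<and> (\<forall>b\<in>Simp. cop (\<omega> \<alpha>) b = (if b = \<alpha> then 1 else 0))"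
    using \<omega>0 by blast
  define \<rho>' where "\<rho>' = (\<Sum>\<alpha>\<in>Simp. \<omega> \<alpha>)"
  have \<rho>'X: "\<rho>' \<in> X" unfolding \<rho>'_def using \<omega> by (intro X_sum) blast
  have c1: "cop \<rho>' b = 1" if b: "b \<in> Simp" for b
  proof -
    have "cop \<rho>' b = (\<Sum>\<alpha>\<in>Simp. cop (\<omega> \<alpha>) b)" unfolding \<rho>'_def cop_sum ..
    also have "\<dots> = (\<Sum>\<alpha>\<in>Simp. if b = \<alpha> then 1 else 0)" using \<omega> b by (intro sum.cong) auto
    also have "\<dots> = 1" using finSimp b by simp
    finally show ?thesis .
  qed
  define \<delta> where "\<delta> = rho Pos - \<rho>'"
  have d0: "\<delta> \<bullet> b = 0" if b: "b \<in> Simp" for b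
  proof -
    have "cop \<delta> b = 0" unfolding \<delta>_def cop_diff using cop_rho_simple[OF b] c1[OF b] by simp
    moreover have "b \<noteq> 0" using b SimpPos Pos_nonzero by blast
    ultimately show ?thesis unfolding cop_def by simp
  qed
  have dPos: "\<delta> \<bullet> a' = 0" if a': "a' \<in> Pos" for a'
  proof -
    obtain c where c: "a' = (\<Sum>b\<in>Simp. of_nat (c b) *\<^sub>R b)" using Pos_decomp[OF a'] by blast
    have "\<delta> \<bullet> a' = (\<Sum>b\<in>Simp. of_nat (c b) * (\<delta> \<bullet> b))" unfolding c by (simp add: inner_sum_right)
    also have "\<dots> = 0" using d0 by simp
    finally show ?thesis .
  qed
  have "\<delta> \<bullet> a = 0"
  proof (cases "a \<in> Pos")
    case True thus ?thesis using dPos by blast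
  next
    case False
    hence "- a \<in> Pos" using Phi_cases a by blast
    thus ?thesis using dPos[of "- a"] by simp
  qed
  hence "cop \<delta> a = 0" unfolding cop_def by simp
  hence "cop (rho Pos) a = cop \<rho>' a" unfolding \<delta>_def cop_diff by simp
  thus ?thesis using Xint[OF \<rho>'X a] by simp
qed

lemma X_orbit:
  assumes lam: "lam \<in> X"
  shows "u \<in> Wp Phi p \<Longrightarrow> u (lam + rho Pos) - rho Pos \<in> X"
proof (induction u rule: Wp_induct)
  case id thus ?case using lam by simp
next
  case (step a m u)
  define \<nu> where "\<nu> = u (lam + rho Pos) - rho Pos"
  have \<nu>X: "\<nu> \<in> X" using step(3) unfolding \<nu>_def .
  have i1: "cop \<nu> a \<in> \<int>" using Xint[OF \<nu>X step(1)] .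
  have i2: "cop (rho Pos) a \<in> \<int>" using rho_int[OF step(1)] .
  have "cop \<nu> a + cop (rho Pos) a - of_int m * real p \<in> \<int>" using i1 i2 by (intro Ints_diff Ints_add) auto
  then obtain n where n: "cop \<nu> a + cop (rho Pos) a - of_int m * real p = of_int n" using Ints_cases by blast
  have "(aff_refl p a m \<circ> u) (lam + rho Pos) - rho Pos = \<nu> - (cop \<nu> a + cop (rho Pos) a - of_int m * real p) *\<^sub>R a"
    unfolding \<nu>_def by (simp add: aff_refl_eq cop_add cop_diff algebra_simps)
  also have "\<dots> = \<nu> - of_int n *\<^sub>R a" using n by simp
  finally show ?case using X_diff[OF \<nu>X X_scale[of a n]] PhiX step(1) by auto
qed

lemma WIp_refl:
  assumes I: "I \<subseteq> Simp" and \<gamma>: "\<gamma> \<in> Pos" and W: "aff_refl p \<gamma> k \<in> WIp I p"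
  shows "\<gamma> \<in> zspan I"
proof -
  have \<gamma>0: "\<gamma> \<noteq> 0" using Pos_nonzero \<gamma> by blast
  define y where "y = ((of_int k * real p - 2) / 2) *\<^sub>R \<gamma>"
  have cy: "cop y \<gamma> = of_int k * real p - 2" unfolding y_def cop_scale cop_self[OF \<gamma>0] by simp
  have "aff_refl p \<gamma> k y - y = 2 *\<^sub>R \<gamma>" unfolding aff_refl_eq cy by simp
  hence "2 *\<^sub>R \<gamma> \<in> span I" using WIp_span[OF W, of y] by simp
  hence "(1/2) *\<^sub>R (2 *\<^sub>R \<gamma>) \<in> span I" by (rule span_scale)
  hence sI: "\<gamma> \<in> span I" by simp
  have finI: "finite I" using finSimp I finite_subset by blast
  obtain e where e: "\<gamma> = (\<Sum>b\<in>I. e b *\<^sub>R b)" using sI span_finite[OF finI] by auto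
  obtain c where c: "\<gamma> = (\<Sum>b\<in>Simp. of_nat (c b) *\<^sub>R b)" using Pos_decomp[OF \<gamma>] by blast
  have eS: "(\<Sum>b\<in>Simp. (if b \<in> I then e b else 0) *\<^sub>R b) = (\<Sum>b\<in>I. e b *\<^sub>R b)"
  proof -
    have "(\<Sum>b\<in>Simp. (if b \<in> I then e b else 0) *\<^sub>R b) = (\<Sum>b\<in>Simp. if b \<in> I then e b *\<^sub>R b else 0)"
      by (rule sum.cong) auto
    also have "\<dots> = (\<Sum>b\<in>Simp \<inter> I. e b *\<^sub>R b)" by (rule sum.inter_restrict[symmetric, OF finSimp])
    also have "Simp \<inter> I = I" using I by blast
    finally show ?thesis .
  qed
  have z: "(\<Sum>b\<in>Simp. (of_nat (c b) - (if b \<in> I then e b else 0)) *\<^sub>R b) = 0"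
    by (simp only: scaleR_diff_left sum_subtractf eS c[symmetric] e[symmetric]) simp
  have cz: "c b = 0" if "b \<in> Simp" "b \<notin> I" for b
    using indep_coeff[OF z that(1)] that(2) by simp
  have "\<gamma> = (\<Sum>b\<in>Simp - I. of_nat (c b) *\<^sub>R b) + (\<Sum>b\<in>I. of_nat (c b) *\<^sub>R b)"
    unfolding c by (rule sum.subset_diff[OF I finSimp])
  also have "(\<Sum>b\<in>Simp - I. of_nat (c b) *\<^sub>R b) = 0" using cz by (intro sum.neutral) auto
  finally have "\<gamma> = (\<Sum>b\<in>I. of_int (int (c b)) *\<^sub>R b)" by simp
  thus ?thesis by (rule zspanI)
qed

end

context rsx begin

lemma wall_Sp: assumes "wall a m" shows "aff_refl p a m \<in> Sp Pos p"
proof -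
  obtain x where x: "\<forall>b\<in>Pos. 0 \<le> cop x b \<and> cop x b \<le> real p" "cop x a = of_int m * real p"
    "\<forall>b\<in>Pos. b \<noteq> a \<longrightarrow> 0 < cop x b \<and> cop x b < real p" and a: "a \<in> Pos"
    using assms unfolding wall_def by blast
  have "x - rho Pos \<in> alcove_cl Pos p" unfolding alcove_cl_def using x(1) by simp
  moreover have "cop (x - rho Pos + rho Pos) a = of_int m * real p" using x(2) by simp
  moreover have "\<forall>b\<in>Pos. b \<noteq> a \<longrightarrow> 0 < cop (x - rho Pos + rho Pos) b \<and> cop (x - rho Pos + rho Pos) b < real p"
    using x(3) by simp
  ultimately show ?thesis unfolding Sp_def using a by blast
qed

lemma Sp_invol: "s \<in> Sp Pos p \<Longrightarrow> s \<circ> s = id"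
  unfolding Sp_def using aff_refl_comp Pos_nonzero by blast

lemma prodl_rev_inv: "set ss \<subseteq> Sp Pos p \<Longrightarrow> prodl (rev ss) \<circ> prodl ss = id \<and> prodl ss \<circ> prodl (rev ss) = id"
proof (induction ss)
  case Nil thus ?case by simp
next
  case (Cons x xs)
  have xi: "x \<circ> x = id" using Cons.prems Sp_invol by simp
  have "set xs \<subseteq> Sp Pos p" using Cons.prems by simp
  hence ih: "prodl (rev xs) \<circ> prodl xs = id" "prodl xs \<circ> prodl (rev xs) = id" using Cons.IH by blast+
  have "prodl (rev (x # xs)) \<circ> prodl (x # xs) = prodl (rev xs) \<circ> (x \<circ> x) \<circ> prodl xs"
    by (simp add: prodl_append comp_assoc)
  also have "\<dots> = id" using xi ih by simp
  finally have 1: "prodl (rev (x # xs)) \<circ> prodl (x # xs) = id" .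
  have "prodl (x # xs) \<circ> prodl (rev (x # xs)) = x \<circ> (prodl xs \<circ> prodl (rev xs)) \<circ> x"
    by (simp add: prodl_append comp_assoc)
  also have "\<dots> = id" using xi ih by simp
  finally show ?case using 1 by blast
qed

lemma dot_eq: "dot Pos f lam = f (lam + rho Pos) - rho Pos" unfolding dot_def ..

lemma main:
  assumes y0A: "lam + rho Pos \<in> A" and lamX: "lam \<in> X" and I: "I \<subseteq> Simp"
  shows "w \<in> Wp Phi p \<Longrightarrow> card (Sep (lam + rho Pos) (w (lam + rho Pos))) = n \<Longrightarrow>
     (\<forall>\<beta>\<in>Pos. 0 \<le> cop (w (lam + rho Pos)) \<beta>) \<Longrightarrow>
     (\<forall>\<beta>\<in>Pos \<inter> zspan I. cop (w (lam + rho Pos)) \<beta> \<le> real p) \<Longrightarrow>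
     \<exists>ss. set ss \<subseteq> Sp Pos p \<and> w = prodl ss \<and>
       (\<forall>i < length ss. prec X Pos p (dot Pos (prodl (take i ss)) lam) (dot Pos (prodl (take (Suc i) ss)) lam)) \<and>
       (\<forall>i \<in> {1..length ss}. prodl (take i ss) \<circ> prodl (rev (take (i - 1) ss)) \<notin> WIp I p)"
proof (induction n arbitrary: w)
  case 0
  define y0 where "y0 = lam + rho Pos"
  have "Sep y0 (w y0) = {}" using 0 Sep_finite unfolding y0_def by simp
  hence "w = id" using free_action[OF y0A[folded y0_def] 0(1)] by simp
  thus ?case by (intro exI[of _ "[]"]) simp
next
  case (Suc n w)
  define y0 where "y0 = lam + rho Pos"
  have wW: "w \<in> Wp Phi p" by fact
  have y0': "y0 \<in> A" using y0A unfolding y0_def .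
  have cardS: "card (Sep y0 (w y0)) = Suc n" using Suc.prems(2) unfolding y0_def .
  have dom: "\<forall>\<beta>\<in>Pos. 0 \<le> cop (w y0) \<beta>" using Suc.prems(3) unfolding y0_def .
  have ci: "\<forall>\<beta>\<in>Pos \<inter> zspan I. cop (w y0) \<beta> \<le> real p" using Suc.prems(4) unfolding y0_def .
  define y where "y = w y0"
  have gy0: "gen y0" using A_gen[OF y0'] .
  have gy: "gen y" unfolding y_def using Wp_gen_pt[OF wW gy0] .
  obtain w' where w': "w' \<in> Wp Phi p" "w \<circ> w' = id" "w' \<circ> w = id" using Wp_inv[OF wW] by blast
  define z where "z = w' y0"
  have wz: "w z = y0" unfolding z_def using w'(2) by (metis comp_apply id_apply)
  have w'y: "w' y = y0" unfolding y_def using w'(3) by (metis comp_apply id_apply)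
  have gz: "gen z" unfolding z_def using Wp_gen_pt[OF w'(1) gy0] .
  have "Sep y0 z = (\<lambda>H. w' ` H) ` Sep y y0" unfolding z_def using Wp_Sep[OF w'(1), of y y0] w'y by simp
  moreover have "Sep y y0 \<noteq> {}" using cardS Sep_sym unfolding y_def by (metis card.empty nat.simps(3))
  ultimately have "Sep y0 z \<noteq> {}" by simp
  hence "z \<notin> A" using A_Sep[OF y0'] by blast
  then obtain a m where wam: "wall a m" and Hz: "hyp a m \<in> Sep y0 z" using exists_wall[OF y0' gz] by blast
  define s where "s = aff_refl p a m"
  have aP: "a \<in> Phi" using wall_Phi[OF wam] .
  have sW: "s \<in> Wp Phi p" unfolding s_def using Wp_gen[OF aP] .
  have ss_id: "s \<circ> s = id" unfolding s_def using aff_refl_comp nonzero aP by blast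
  obtain c k' where c: "c \<in> Phi" "w ` hyp a m = hyp c k'" "w \<circ> aff_refl p a m = aff_refl p c k' \<circ> w"
    using Wp_conj[OF wW aP] by blast
  obtain c' k'' where c': "c' \<in> Pos" "hyp c k' = hyp c' k''" "aff_refl p c k' = aff_refl p c' k''"
    using normalize[OF c(1)] by blast
  define s' where "s' = aff_refl p c' k''"
  define H' where "H' = hyp c' k''"
  have c'P: "c' \<in> Phi" using c'(1) PosPhi by auto
  have conj: "w \<circ> s = s' \<circ> w" unfolding s_def s'_def using c(3) c'(3) by simp
  have wH: "w ` hyp a m = H'" unfolding H'_def using c(2) c'(2) by simp
  have H'y: "H' \<in> Sep y0 y"
  proof -
    have "Sep (w y0) (w z) = (\<lambda>H. w ` H) ` Sep y0 z" by (rule Wp_Sep[OF wW])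
    hence "H' \<in> Sep (w y0) (w z)" using Hz wH by blast
    thus ?thesis using wz Sep_sym unfolding y_def by metis
  qed
  have s'y: "s' y = w (s y0)" unfolding y_def using conj by (metis comp_apply)
  have Sy: "Sep y (s' y) = {H'}"
  proof -
    have "Sep y (s' y) = Sep (w y0) (w (s y0))" using s'y unfolding y_def by simp
    also have "\<dots> = (\<lambda>H. w ` H) ` Sep y0 (s y0)" by (rule Wp_Sep[OF wW])
    also have "Sep y0 (s y0) = {hyp a m}" unfolding s_def by (rule crossing[OF y0' wam])
    finally show ?thesis using wH by simp
  qed
  have s'W: "s' \<in> Wp Phi p" unfolding s'_def using Wp_gen[OF c'P] .
  have gs'y: "gen (s' y)" using Wp_gen_pt[OF s'W gy] .
  have Snew: "Sep y0 (s' y) = Sep y0 y - {H'}"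
  proof -
    have "X \<in> Sep y0 (s' y) \<longleftrightarrow> (X \<in> Sep y0 y \<longleftrightarrow> X \<notin> Sep y (s' y))" for X
      by (rule Sep_trans[OF gy0 gy gs'y])
    thus ?thesis using Sy H'y by auto
  qed
  have cardnew: "card (Sep y0 (s' y)) = n"
    using Snew H'y cardS Sep_finite unfolding y_def by simp
  have cy0c: "0 < cop y0 c'" "cop y0 c' < real p" using y0' c'(1) unfolding A_def by auto
  have sepH': "(cop y0 c' - of_int k'' * real p) * (cop y c' - of_int k'' * real p) < 0"
    using H'y Sep_hyp_iff[OF c'P] unfolding H'_def by blast
  have domy: "0 \<le> cop y c'" using dom c'(1) unfolding y_def by blast
  have k1: "k'' \<ge> 1"
  proof (rule ccontr)
    assume "\<not> k'' \<ge> 1"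
    hence "real_of_int k'' \<le> 0" by simp
    hence "of_int k'' * real p \<le> 0" by (simp add: mult_nonpos_nonneg)
    hence f1: "cop y0 c' - of_int k'' * real p > 0" using cy0c by linarith
    hence "cop y c' - of_int k'' * real p < 0" using sepH' by (simp add: mult_less_0_iff)
    thus False using domy \<open>of_int k'' * real p \<le> 0\<close> by linarith
  qed
  have kp: "of_int k'' * real p \<ge> real p"
  proof -
    have "real_of_int k'' \<ge> 1" using k1 by simp
    hence "real_of_int k'' * real p \<ge> 1 * real p" by (intro mult_right_mono) auto
    thus ?thesis by simp
  qed
  have cyc: "cop y c' > of_int k'' * real p"
  proof -
    have "cop y0 c' - of_int k'' * real p < 0" using cy0c kp by linarith
    thus ?thesis using sepH' by (simp add: mult_less_0_iff)
  qed
  define ws where "ws = w \<circ> s"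
  have wsW: "ws \<in> Wp Phi p" unfolding ws_def using Wp_comp[OF wW sW] .
  have wsy0: "ws y0 = s' y" unfolding ws_def using s'y by simp
  have dom': "\<forall>\<beta>\<in>Pos. 0 \<le> cop (ws y0) \<beta>"
  proof
    fix \<beta> assume \<beta>: "\<beta> \<in> Pos"
    have \<beta>P: "\<beta> \<in> Phi" using \<beta> PosPhi by auto
    show "0 \<le> cop (ws y0) \<beta>"
    proof (rule ccontr)
      assume "\<not> 0 \<le> cop (ws y0) \<beta>"
      hence n0: "cop (s' y) \<beta> < 0" using wsy0 by simp
      have p0: "0 < cop y0 \<beta>" using y0' \<beta> unfolding A_def by auto
      have "(cop y0 \<beta> - of_int 0 * real p) * (cop (s' y) \<beta> - of_int 0 * real p) < 0"
        using n0 p0 by (simp add: mult_pos_neg)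
      hence "hyp \<beta> 0 \<in> Sep y0 (s' y)" using Sep_hyp_iff[OF \<beta>P] by blast
      hence "hyp \<beta> 0 \<in> Sep y0 y" using Snew by blast
      hence "(cop y0 \<beta> - of_int 0 * real p) * (cop y \<beta> - of_int 0 * real p) < 0" using Sep_hyp_iff[OF \<beta>P] by blast
      hence "cop y \<beta> < 0" using p0 by (simp add: mult_less_0_iff)
      thus False using dom \<beta> unfolding y_def by force
    qed
  qed
  have ci': "\<forall>\<beta>\<in>Pos \<inter> zspan I. cop (ws y0) \<beta> \<le> real p"
  proof
    fix \<beta> assume \<beta>: "\<beta> \<in> Pos \<inter> zspan I"
    have \<beta>P: "\<beta> \<in> Phi" using \<beta> PosPhi by auto
    show "cop (ws y0) \<beta> \<le> real p"
    proof (rule ccontr)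
      assume "\<not> cop (ws y0) \<beta> \<le> real p"
      hence n0: "cop (s' y) \<beta> > real p" using wsy0 by simp
      have p0: "cop y0 \<beta> < real p" using y0' \<beta> unfolding A_def by auto
      have "(cop y0 \<beta> - of_int 1 * real p) * (cop (s' y) \<beta> - of_int 1 * real p) < 0"
        using n0 p0 by (simp add: mult_neg_pos)
      hence "hyp \<beta> 1 \<in> Sep y0 (s' y)" using Sep_hyp_iff[OF \<beta>P] by blast
      hence "hyp \<beta> 1 \<in> Sep y0 y" using Snew by blast
      hence "(cop y0 \<beta> - of_int 1 * real p) * (cop y \<beta> - of_int 1 * real p) < 0" using Sep_hyp_iff[OF \<beta>P] by blast
      hence "cop y \<beta> > real p" using p0 by (simp add: mult_less_0_iff)
      thus False using ci \<beta> unfolding y_def by force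
    qed
  qed
  have c1: "card (Sep (lam + rho Pos) (ws (lam + rho Pos))) = n" using cardnew wsy0 unfolding y0_def by simp
  have d1: "\<forall>\<beta>\<in>Pos. 0 \<le> cop (ws (lam + rho Pos)) \<beta>" using dom' unfolding y0_def .
  have e1: "\<forall>\<beta>\<in>Pos \<inter> zspan I. cop (ws (lam + rho Pos)) \<beta> \<le> real p" using ci' unfolding y0_def .
  from Suc.IH[OF wsW c1 d1 e1] obtain ss' where ss': "set ss' \<subseteq> Sp Pos p" "ws = prodl ss'"
    "\<forall>i < length ss'. prec X Pos p (dot Pos (prodl (take i ss')) lam) (dot Pos (prodl (take (Suc i) ss')) lam)"
    "\<forall>i \<in> {1..length ss'}. prodl (take i ss') \<circ> prodl (rev (take (i - 1) ss')) \<notin> WIp I p"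
    by blast
  define ss where "ss = ss' @ [s]"
  have sSp: "s \<in> Sp Pos p" unfolding s_def by (rule wall_Sp[OF wam])
  have setss: "set ss \<subseteq> Sp Pos p" unfolding ss_def using ss'(1) sSp by simp
  have wss: "w = prodl ss"
  proof -
    have "prodl ss = ws \<circ> s" unfolding ss_def ss'(2) by (simp add: prodl_append)
    also have "\<dots> = w \<circ> (s \<circ> s)" unfolding ws_def by (simp add: comp_assoc)
    finally show ?thesis using ss_id by simp
  qed
  have lenss: "length ss = Suc (length ss')" unfolding ss_def by simp
  have chain: "\<forall>i < length ss. prec X Pos p (dot Pos (prodl (take i ss)) lam) (dot Pos (prodl (take (Suc i) ss)) lam)"
  proof (intro allI impI)
    fix i assume i: "i < length ss"
    show "prec X Pos p (dot Pos (prodl (take i ss)) lam) (dot Pos (prodl (take (Suc i) ss)) lam)"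
    proof (cases "i < length ss'")
      case True
      hence "take i ss = take i ss'" "take (Suc i) ss = take (Suc i) ss'" unfolding ss_def by simp_all
      thus ?thesis using ss'(3) True by simp
    next
      case False
      hence ieq: "i = length ss'" using i lenss by simp
      have t1: "prodl (take i ss) = ws" unfolding ieq ss_def ss'(2) by simp
      have t2: "prodl (take (Suc i) ss) = w" unfolding ieq using wss lenss by simp
      have d1: "dot Pos ws lam = s' y - rho Pos" unfolding dot_eq wsy0[unfolded y0_def, symmetric] y0_def ..
      have d2: "dot Pos w lam = y - rho Pos" unfolding dot_eq y_def y0_def ..
      have yX: "y - rho Pos \<in> X" unfolding y_def y0_def by (rule X_orbit[OF lamX wW])
      have "linkage_step X Pos p (s' y - rho Pos) (y - rho Pos)"
        unfolding linkage_step_def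
      proof (intro conjI exI[of _ c'] exI[of _ k''])
        show "y - rho Pos \<in> X" by fact
        show "c' \<in> Pos" by fact
        show "of_int k'' * real p \<le> cop (y - rho Pos + rho Pos) c'" using cyc by simp
        show "s' y - rho Pos = dot Pos (aff_refl p c' k'') (y - rho Pos)" unfolding dot_eq s'_def by simp
      qed
      hence pe: "preceq X Pos p (s' y - rho Pos) (y - rho Pos)" unfolding preceq_def by (rule r_into_rtranclp)
      have "s' y \<noteq> y"
      proof
        assume "s' y = y"
        hence "cop y c' = of_int k'' * real p" using aff_refl_fix_iff Pos_nonzero c'(1) unfolding s'_def by blast
        thus False using cyc by simp
      qed
      hence "s' y - rho Pos \<noteq> y - rho Pos" by simp
      thus ?thesis unfolding t1 t2 d1 d2 prec_def using pe by simp
    qed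
  qed
  have noWI: "\<forall>i \<in> {1..length ss}. prodl (take i ss) \<circ> prodl (rev (take (i - 1) ss)) \<notin> WIp I p"
  proof
    fix i assume i: "i \<in> {1..length ss}"
    show "prodl (take i ss) \<circ> prodl (rev (take (i - 1) ss)) \<notin> WIp I p"
    proof (cases "i \<le> length ss'")
      case True
      hence "take i ss = take i ss'" "take (i - 1) ss = take (i - 1) ss'" unfolding ss_def by simp_all
      moreover have "i \<in> {1..length ss'}" using i True by simp
      ultimately show ?thesis using ss'(4) by simp
    next
      case False
      hence ieq: "i = Suc (length ss')" using i lenss by simp
      have t1: "prodl (take i ss) = w" unfolding ieq using wss lenss by simp
      have t2: "take (i - 1) ss = ss'" unfolding ieq ss_def by simp
      define Q where "Q = prodl (rev ss')"
      have PQ: "ws \<circ> Q = id" unfolding Q_def ss'(2) using prodl_rev_inv[OF ss'(1)] by blast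
      have "s' = s' \<circ> (ws \<circ> Q)" using PQ by simp
      also have "\<dots> = (s' \<circ> w) \<circ> s \<circ> Q" unfolding ws_def by (simp add: comp_assoc)
      also have "\<dots> = (w \<circ> s) \<circ> s \<circ> Q" using conj by simp
      also have "\<dots> = w \<circ> (s \<circ> s) \<circ> Q" by (simp add: comp_assoc)
      also have "\<dots> = w \<circ> Q" using ss_id by simp
      finally have eqs: "prodl (take i ss) \<circ> prodl (rev (take (i - 1) ss)) = s'"
        unfolding t1 t2 Q_def by simp
      show ?thesis
      proof
        assume "prodl (take i ss) \<circ> prodl (rev (take (i - 1) ss)) \<in> WIp I p"
        hence "s' \<in> WIp I p" using eqs by simp
        hence "c' \<in> zspan I" unfolding s'_def by (rule WIp_refl[OF I c'(1)])
        hence "cop y c' \<le> real p" using ci c'(1) unfolding y_def by blast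
        thus False using cyc kp by linarith
      qed
    qed
  qed
  show ?case using setss wss chain noWI by blast
qed

lemma chain_preceq:
  assumes "\<forall>i < length ss. prec X Pos p (dot Pos (prodl (take i ss)) lam) (dot Pos (prodl (take (Suc i) ss)) lam)"
  shows "j \<le> length ss \<Longrightarrow> preceq X Pos p lam (dot Pos (prodl (take j ss)) lam)"
proof (induction j)
  case 0
  have e: "dot Pos (prodl (take 0 ss)) lam = lam" unfolding dot_eq by simp
  show ?case unfolding e preceq_def by (rule rtranclp.rtrancl_refl)
next
  case (Suc j)
  have "preceq X Pos p lam (dot Pos (prodl (take j ss)) lam)" using Suc by simp
  moreover have "preceq X Pos p (dot Pos (prodl (take j ss)) lam) (dot Pos (prodl (take (Suc j) ss)) lam)"
    using assms Suc.prems unfolding prec_def by simp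
  ultimately show ?case unfolding preceq_def by (rule rtranclp_trans)
qed

end

theorem proposition4p32:
  fixes X Phi Pos Simp I :: "'a::euclidean_space set"
    and p :: nat and s w :: "'a \<Rightarrow> 'a" and lam mu :: 'a
  assumes "std_root_datum X Phi Pos Simp"
    and "prime p" and "coxeter_number Pos \<le> real p"
    and "I \<subseteq> Simp"
    and "s \<in> Sp Pos p"
    and "lam \<in> alcove Pos p \<inter> X"
    and "mu \<in> alcove_cl Pos p \<inter> X"
    and "{v \<in> Wp Phi p. dot Pos v mu = mu} = {id, s}"
    and "w \<in> WIlam Phi Pos I p lam"
    and "dot Pos w lam \<in> dominant X Pos"
  shows "preceq X Pos p lam (dot Pos w lam) \<and>
    (\<exists>ss. set ss \<subseteq> Sp Pos p \<and> w = prodl ss \<and>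
       (\<forall>i < length ss. prec X Pos p (dot Pos (prodl (take i ss)) lam)
                                      (dot Pos (prodl (take (Suc i) ss)) lam)) \<and>
       (\<forall>i \<in> {1..length ss}.
          prodl (take i ss) \<circ> prodl (rev (take (i - 1) ss)) \<notin> WIp I p))"
proof -
  have S: "std_root_datum X Phi Pos Simp" by fact
  have S': "(\<exists>B. independent B \<and> span B = UNIV \<and> X = zspan B) \<and>
     finite Phi \<and> 0 \<notin> Phi \<and> Phi \<subseteq> X \<and>
     (\<forall>x\<in>X. \<forall>a\<in>Phi. cop x a \<in> \<int>) \<and>
     (\<forall>a\<in>Phi. \<forall>b\<in>Phi. refl a b \<in> Phi) \<and>
     (\<forall>a\<in>Phi. \<forall>c::real. c *\<^sub>R a \<in> Phi \<longrightarrow> c = 1 \<or> c = -1) \<and>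
     Pos \<subseteq> Phi \<and> Phi = Pos \<union> uminus ` Pos \<and> Pos \<inter> uminus ` Pos = {} \<and>
     Simp \<subseteq> Pos \<and> independent Simp \<and>
     (\<forall>a\<in>Pos. \<exists>c::'a \<Rightarrow> nat. a = (\<Sum>b\<in>Simp. of_nat (c b) *\<^sub>R b)) \<and>
     (\<forall>a\<in>Simp. \<exists>x\<in>X. \<forall>b\<in>Simp. cop x b = (if b = a then 1 else 0))"
    using S unfolding std_root_datum_def .
  have fin: "finite Phi" using S'[THEN conjunct2, THEN conjunct1] .
  have z0: "0 \<notin> Phi" using S'[THEN conjunct2, THEN conjunct2, THEN conjunct1] .
  have PX: "Phi \<subseteq> X" using S'[THEN conjunct2, THEN conjunct2, THEN conjunct2, THEN conjunct1] .
  have XI: "\<forall>x\<in>X. \<forall>a\<in>Phi. cop x a \<in> \<int>"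
    using S'[THEN conjunct2, THEN conjunct2, THEN conjunct2, THEN conjunct2, THEN conjunct1] .
  have RC: "\<forall>a\<in>Phi. \<forall>b\<in>Phi. refl a b \<in> Phi"
    using S'[THEN conjunct2, THEN conjunct2, THEN conjunct2, THEN conjunct2, THEN conjunct2, THEN conjunct1] .
  have RD: "\<forall>a\<in>Phi. \<forall>c::real. c *\<^sub>R a \<in> Phi \<longrightarrow> c = 1 \<or> c = -1"
    using S'[THEN conjunct2, THEN conjunct2, THEN conjunct2, THEN conjunct2, THEN conjunct2, THEN conjunct2,
      THEN conjunct1] .
  have PP: "Pos \<subseteq> Phi"
    using S'[THEN conjunct2, THEN conjunct2, THEN conjunct2, THEN conjunct2, THEN conjunct2, THEN conjunct2,
      THEN conjunct2, THEN conjunct1] .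
  have PU: "Phi = Pos \<union> uminus ` Pos"
    using S'[THEN conjunct2, THEN conjunct2, THEN conjunct2, THEN conjunct2, THEN conjunct2, THEN conjunct2,
      THEN conjunct2, THEN conjunct2, THEN conjunct1] .
  have PD: "Pos \<inter> uminus ` Pos = {}"
    using S'[THEN conjunct2, THEN conjunct2, THEN conjunct2, THEN conjunct2, THEN conjunct2, THEN conjunct2,
      THEN conjunct2, THEN conjunct2, THEN conjunct2, THEN conjunct1] .
  have p0: "p > 0" using \<open>prime p\<close> prime_gt_0_nat by blast
  have rs: "rs Phi Pos p"
  proof (rule rs.intro)
    show "finite Phi" by fact
    show "0 \<notin> Phi" by fact
    show "\<And>a b. a \<in> Phi \<Longrightarrow> b \<in> Phi \<Longrightarrow> refl a b \<in> Phi" using RC by blast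
    show "\<And>a c. a \<in> Phi \<Longrightarrow> c *\<^sub>R a \<in> Phi \<Longrightarrow> c = 1 \<or> c = -1" using RD by blast
    show "\<And>a b. a \<in> Phi \<Longrightarrow> b \<in> Phi \<Longrightarrow> cop a b \<in> \<int>" using XI PX by blast
    show "Pos \<subseteq> Phi" by fact
    show "Phi = Pos \<union> uminus ` Pos" by fact
    show "Pos \<inter> uminus ` Pos = {}" by fact
    show "p > 0" by fact
  qed
  have rsx: "rsx Phi Pos p X Simp" by (rule rsx.intro[OF rs]) (simp add: rsx_axioms_def S)
  interpret R: rsx Phi Pos p X Simp by (rule rsx)
  have lamA: "lam + rho Pos \<in> R.A" using \<open>lam \<in> alcove Pos p \<inter> X\<close> unfolding alcove_def R.A_def by simp
  have lamX: "lam \<in> X" using \<open>lam \<in> alcove Pos p \<inter> X\<close> by simp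
  have wW: "w \<in> Wp Phi p" using \<open>w \<in> WIlam Phi Pos I p lam\<close> unfolding WIlam_def by simp
  have de: "dot Pos w lam + rho Pos = w (lam + rho Pos)" unfolding dot_def by simp
  have "dot Pos w lam \<in> CI Pos I p" using \<open>w \<in> WIlam Phi Pos I p lam\<close> unfolding WIlam_def by simp
  hence "\<forall>\<beta>\<in>Pos \<inter> zspan I. cop (dot Pos w lam + rho Pos) \<beta> \<le> real p" unfolding CI_def by blast
  hence ci: "\<forall>\<beta>\<in>Pos \<inter> zspan I. cop (w (lam + rho Pos)) \<beta> \<le> real p" unfolding de .
  have "\<forall>\<beta>\<in>Pos. 0 \<le> cop (dot Pos w lam + rho Pos) \<beta>"
    using \<open>dot Pos w lam \<in> dominant X Pos\<close> unfolding dominant_def by blast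
  hence dom: "\<forall>\<beta>\<in>Pos. 0 \<le> cop (w (lam + rho Pos)) \<beta>" unfolding de .
  obtain ss where ss: "set ss \<subseteq> Sp Pos p" "w = prodl ss"
    "\<forall>i < length ss. prec X Pos p (dot Pos (prodl (take i ss)) lam) (dot Pos (prodl (take (Suc i) ss)) lam)"
    "\<forall>i \<in> {1..length ss}. prodl (take i ss) \<circ> prodl (rev (take (i - 1) ss)) \<notin> WIp I p"
    using R.main[OF lamA lamX \<open>I \<subseteq> Simp\<close> wW refl dom ci] by blast
  have "preceq X Pos p lam (dot Pos (prodl (take (length ss) ss)) lam)"
    by (rule R.chain_preceq[OF ss(3)]) simp
  hence "preceq X Pos p lam (dot Pos w lam)" using ss(2) by simp
  thus ?thesis using ss by blast
qed


end
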